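(* Let $\beta\ge \tfrac12$ and $R>0$, and fix any distribution of the censoring pair $(L,U)$ with $\mathbb P(L\neq U)=1$. Then there is a constant $c>0$ depending only on $\beta$ and $R$ such that \[ \liminf_{n\to\infty}\ \inf_{\hat f}\ \sup_{f\in W(\beta,R)}\ \mathbb E_f\!\left(n^{\frac{2\beta}{2\beta+1}}\,\|\hat f-f\|_2^2\right)\ \ge\ c, \] where the supremum is over probability densities $f$ on $\mathbb S^1$ belonging to $W(\beta,R)$, $\mathbb E_f$ denotes expectation when $X$ has density $f$, and the infimum is over all estimators $\hat f$, i.e. all measurable functions of the observed sample $(X_1',L_1,U_1),\dots,(X_n',L_n,U_n)$.
   Context: Circle convention: $\mathbb S^1$ is identified with $[0,2\pi)$ (angles taken mod $2\pi$) with anticlockwise orientation. For $x,y\in\mathbb S^1$, the circular interval $[x,y]$ is the set of points met going anticlockwise from $x$ to $y$: it is the usual interval if $x\le y$ and $[x,2\pi)\cup[0,y]$ if $x>y$. Censoring model: $X$ is an $\mathbb S^1$-valued random variable with density $f$ (w.r.t. Lebesgue measure on $[0,2\pi)$); $(L,U)$ is a random pair in $(\mathbb S^1)^2$, independent of $X$, with $L\ne U$ a.s. The triplets $(X_i,L_i,U_i)$, $i=1,\dots,n$, are i.i.d. copies of $(X,L,U)$. Set $\Delta_i=\mathbf 1\{X_i\in[L_i,U_i]\}$ and $X_i'=X_i$ if $\Delta_i=1$, $X_i'=-\pi$ otherwise. The observations are $(X_i',L_i,U_i)_{1\le i\le n}$. $\|g\|_2^2=\int_0^{2\pi}g(x)^2dx$,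 $\langle g,h\rangle_2=\int_0^{2\pi}gh$. Trigonometric basis of $\mathbb L^2(\mathbb S^1)$: $\varphi_0=1/\sqrt{2\pi}$, and for $j\ge1$, $\varphi_{2j-1}=\pi^{-1/2}\cos(j\cdot)$, $\varphi_{2j}=\pi^{-1/2}\sin(j\cdot)$. Sobolev class: with $\alpha_j=j^\beta$ for even $j$ and $\alpha_j=(j+1)^\beta$ for odd $j$, $W(\beta,R)=\{g\in\mathbb L^2(\mathbb S^1):\ \sum_{j\ge0}\alpha_j^2|\langle g,\varphi_j\rangle_2|^2<R^2/\pi^{2\beta}\}$. *)

theory Defs
  imports "HOL-Probability.Probability"
begin

text \<open>The circle S^1 is identified with [0, 2 pi).\<close>

definition circ :: "real set" where
  "circ = {0..<2*pi}"

text \<open>Anticlockwise circular interval [x,y].\<close>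
definition circ_interval :: "real \<Rightarrow> real \<Rightarrow> real set" where
  "circ_interval x y =
     (if x \<le> y then {t \<in> circ. x \<le> t \<and> t \<le> y}
      else {t \<in> circ. x \<le> t} \<union> {t \<in> circ. t \<le> y})"

definition trig_basis :: "nat \<Rightarrow> real \<Rightarrow> real" where
  "trig_basis k x =
     (if k = 0 then 1 / sqrt (2*pi)
      else if odd k then cos (real ((k+1) div 2) * x) / sqrt pi
      else sin (real (k div 2) * x) / sqrt pi)"

definition sob_weight :: "real \<Rightarrow> nat \<Rightarrow> real" where
  "sob_weight \<beta> j = (if even j then real j powr \<beta> else real (j+1) powr \<beta>)"

definition coeff :: "(real \<Rightarrow> real) \<Rightarrow> nat \<Rightarrow> real" where
  "coeff g j = (LINT x:circ|lborel. g x * trig_basis j x)"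

definition sobolev :: "real \<Rightarrow> real \<Rightarrow> (real \<Rightarrow> real) set" where
  "sobolev \<beta> R = {g. g \<in> borel_measurable lborel
      \<and> set_integrable lborel circ (\<lambda>x. (g x)\<^sup>2)
      \<and> (\<Sum>j. ennreal ((sob_weight \<beta> j)\<^sup>2 * (coeff g j)\<^sup>2)) < ennreal (R\<^sup>2 / pi powr (2*\<beta>))}"

definition is_density :: "(real \<Rightarrow> real) \<Rightarrow> bool" where
  "is_density f \<longleftrightarrow> f \<in> borel_measurable lborel \<and> (\<forall>x\<in>circ. 0 \<le> f x)
      \<and> (\<integral>\<^sup>+x\<in>circ. ennreal (f x) \<partial>lborel) = 1"

definition censoring_law :: "(real \<times> real) measure \<Rightarrow> bool" where
  "censoring_law Q \<longleftrightarrow> prob_space Q \<and> sets Q = sets borel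
      \<and> (AE p in Q. fst p \<in> circ \<and> snd p \<in> circ \<and> fst p \<noteq> snd p)"

definition X_law :: "(real \<Rightarrow> real) \<Rightarrow> real measure" where
  "X_law f = density lborel (\<lambda>x. ennreal (f x) * indicator circ x)"

text \<open>Law of one observation (X', L, U), X independent of (L,U); X' = -pi if censored.\<close>
definition obs_law :: "(real \<times> real) measure \<Rightarrow> (real \<Rightarrow> real) \<Rightarrow> (real \<times> real \<times> real) measure" where
  "obs_law Q f = distr (X_law f \<Otimes>\<^sub>M Q) borel
      (\<lambda>(x, (l, u)). (if x \<in> circ_interval l u then x else -pi, l, u))"

definition sample_law :: "(real \<times> real) measure \<Rightarrow> (real \<Rightarrow> real) \<Rightarrow> nat \<Rightarrow> (nat \<Rightarrow> real \<times> real \<times> real) measure" where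
  "sample_law Q f n = PiM {..<n} (\<lambda>_. obs_law Q f)"

definition estimators :: "nat \<Rightarrow> ((nat \<Rightarrow> real \<times> real \<times> real) \<Rightarrow> real \<Rightarrow> real) set" where
  "estimators n = {fh. (\<lambda>(\<omega>, x). fh \<omega> x) \<in>
      borel_measurable (PiM {..<n} (\<lambda>_. (borel :: (real \<times> real \<times> real) measure)) \<Otimes>\<^sub>M lborel)}"

definition risk :: "(real \<times> real) measure \<Rightarrow> nat \<Rightarrow> ((nat \<Rightarrow> real \<times> real \<times> real) \<Rightarrow> real \<Rightarrow> real)
     \<Rightarrow> (real \<Rightarrow> real) \<Rightarrow> ennreal" where
  "risk Q n fh f = (\<integral>\<^sup>+\<omega>. (\<integral>\<^sup>+x\<in>circ. ennreal ((fh \<omega> x - f x)\<^sup>2) \<partial>lborel) \<partial>sample_law Q f n)"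

definition minimax_risk :: "real \<Rightarrow> real \<Rightarrow> (real \<times> real) measure \<Rightarrow> nat \<Rightarrow> ennreal" where
  "minimax_risk \<beta> R Q n =
     (INF fh \<in> estimators n. SUP f \<in> {f. is_density f \<and> f \<in> sobolev \<beta> R}. risk Q n fh f)"

end

theory Submission
  imports Defs
begin


lemma circ_LINT_eq: "(LINT x:circ|lborel. g x) = (LINT x:{0..2*pi}|lborel. (g x::real))"
  unfolding circ_def
  by (rule set_integral_discrete_difference[where X="{2*pi}"]) auto

lemma FTC_0_2pi:
  assumes "\<And>x. (F has_real_derivative f x) (at x)" "continuous_on {0..2*pi} f"
  shows "(LINT x:{0..2*pi}|lborel. f x) = F (2*pi) - F 0"
  unfolding set_lebesgue_integral_def
  by (rule integral_FTC_atLeastAtMost)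
     (use assms in \<open>auto simp: has_real_derivative_iff_has_vector_derivative[symmetric] intro: has_field_derivative_at_within\<close>)

lemma int_cos_int:
  fixes m :: int
  shows "(LINT x:{0..2*pi}|lborel. cos (of_int m * x)) = (if m = 0 then 2*pi else 0)"
proof (cases "m = 0")
  case True then show ?thesis by (simp add: set_lebesgue_integral_def)
next
  case False
  have "(LINT x:{0..2*pi}|lborel. cos (of_int m * x)) = sin (of_int m * (2*pi)) / of_int m - sin (of_int m * 0) / of_int m"
    by (rule FTC_0_2pi)
       (use False in \<open>auto intro!: continuous_intros derivative_eq_intros\<close>)
  also have "\<dots> = 0" by (simp only: mult.commute[of "of_int m"] sin_int_2pin) simp
  finally show ?thesis using False by simp
qed

lemma int_sin_int:
  fixes m :: int
  shows "(LINT x:{0..2*pi}|lborel. sin (of_int m * x)) = 0"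
proof (cases "m = 0")
  case True then show ?thesis by simp
next
  case False
  have "(LINT x:{0..2*pi}|lborel. sin (of_int m * x)) = (- cos (of_int m * (2*pi)) / of_int m) - (- cos (of_int m * 0) / of_int m)"
    by (rule FTC_0_2pi)
       (use False in \<open>auto intro!: continuous_intros derivative_eq_intros\<close>)
  also have "\<dots> = 0" by (simp only: mult.commute[of "of_int m"] cos_int_2pin) simp
  finally show ?thesis .
qed

lemma cont_set_integrable:
  fixes f :: "real \<Rightarrow> real"
  shows "continuous_on {0..2*pi} f \<Longrightarrow> set_integrable lborel {0..2*pi} f"
  unfolding set_integrable_def by (rule borel_integrable_compact) auto

lemma int_cos_cos:
  fixes p q :: nat
  shows "(LINT x:{0..2*pi}|lborel. cos (real p * x) * cos (real q * x)) = (if p = q then (if p = 0 then 2*pi else pi) else 0)"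
proof -
  have e: "cos (real p * x) * cos (real q * x) = cos (of_int (int p - int q) * x) / 2 + cos (of_int (int p + int q) * x) / 2" for x
    by (simp add: cos_diff cos_add field_simps)
  have "(LINT x:{0..2*pi}|lborel. cos (real p * x) * cos (real q * x))
     = (LINT x:{0..2*pi}|lborel. cos (of_int (int p - int q) * x)) / 2 + (LINT x:{0..2*pi}|lborel. cos (of_int (int p + int q) * x)) / 2"
    unfolding e
    by (subst set_integral_add) (auto intro!: cont_set_integrable continuous_intros)
  also have "\<dots> = (if p = q then (if p = 0 then 2*pi else pi) else 0)"
    unfolding int_cos_int by auto
  finally show ?thesis .
qed

lemma int_sin_sin:
  fixes p q :: nat
  shows "(LINT x:{0..2*pi}|lborel. sin (real p * x) * sin (real q * x)) = (if p = q \<and> p \<noteq> 0 then pi else 0)"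
proof -
  have e: "sin (real p * x) * sin (real q * x) = cos (of_int (int p - int q) * x) / 2 - cos (of_int (int p + int q) * x) / 2" for x
    by (simp add: cos_diff cos_add field_simps)
  have "(LINT x:{0..2*pi}|lborel. sin (real p * x) * sin (real q * x))
     = (LINT x:{0..2*pi}|lborel. cos (of_int (int p - int q) * x)) / 2 - (LINT x:{0..2*pi}|lborel. cos (of_int (int p + int q) * x)) / 2"
    unfolding e
    by (subst set_integral_diff) (auto intro!: cont_set_integrable continuous_intros)
  also have "\<dots> = (if p = q \<and> p \<noteq> 0 then pi else 0)"
    unfolding int_cos_int by auto
  finally show ?thesis .
qed

lemma int_sin_cos:
  fixes p q :: nat
  shows "(LINT x:{0..2*pi}|lborel. sin (real p * x) * cos (real q * x)) = 0"
proof -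
  have e: "sin (real p * x) * cos (real q * x) = sin (of_int (int p + int q) * x) / 2 + sin (of_int (int p - int q) * x) / 2" for x
    by (simp add: sin_diff sin_add field_simps)
  have "(LINT x:{0..2*pi}|lborel. sin (real p * x) * cos (real q * x))
     = (LINT x:{0..2*pi}|lborel. sin (of_int (int p + int q) * x)) / 2 + (LINT x:{0..2*pi}|lborel. sin (of_int (int p - int q) * x)) / 2"
    unfolding e
    by (subst set_integral_add) (auto intro!: cont_set_integrable continuous_intros)
  also have "\<dots> = 0"
    unfolding int_sin_int by auto
  finally show ?thesis .
qed

definition amp :: "nat \<Rightarrow> real" where "amp k = (if k = 0 then 1 / sqrt (2*pi) else 1 / sqrt pi)"
definition freq :: "nat \<Rightarrow> nat" where "freq k = (k+1) div 2"
definition cty :: "nat \<Rightarrow> bool" where "cty k \<longleftrightarrow> k = 0 \<or> odd k"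

lemma trig_basis_alt:
  "trig_basis k x = amp k * (if cty k then cos (real (freq k) * x) else sin (real (freq k) * x))"
  unfolding trig_basis_def amp_def freq_def cty_def
  by (auto elim!: evenE)

lemma freq_inj: "cty j = cty k \<Longrightarrow> freq j = freq k \<Longrightarrow> j = k"
  unfolding freq_def cty_def by (auto elim!: evenE oddE)

lemma freq_pos: "\<not> cty k \<Longrightarrow> freq k \<noteq> 0"
  unfolding freq_def cty_def by (auto elim!: evenE oddE)

lemma amp_sq: "(amp k)^2 * (if k = 0 then 2*pi else pi) = 1"
  unfolding amp_def by (auto simp: power_divide)

lemma trig_ortho:
  "(LINT x:circ|lborel. trig_basis j x * trig_basis k x) = (if j = k then 1 else 0)"
proof -
  have "(LINT x:circ|lborel. trig_basis j x * trig_basis k x)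
    = (amp j * amp k) * (LINT x:{0..2*pi}|lborel. (if cty j then cos (real (freq j) * x) else sin (real (freq j) * x))
           * (if cty k then cos (real (freq k) * x) else sin (real (freq k) * x)))"
    unfolding circ_LINT_eq trig_basis_alt
    by (subst set_integral_mult_right[symmetric]) (simp add: algebra_simps)
  also have "\<dots> = (if j = k then 1 else 0)"
  proof (cases "j = k")
    case True
    have f0: "freq k = 0 \<longleftrightarrow> k = 0" by (auto simp: freq_def)
    have c0: "k = 0 \<Longrightarrow> cty k" by (simp add: cty_def)
    show ?thesis
      using amp_sq[of k] freq_pos[of k] True f0 c0
      by (cases "cty k") (auto simp: int_cos_cos int_sin_sin power2_eq_square)
  next
    case False
    have cs: "(LINT x:{0..2*pi}|lborel. cos (real p * x) * sin (real q * x)) = 0" for p q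
      using int_sin_cos[of q p] by (simp add: mult.commute)
    show ?thesis using freq_inj[of j k] False
      by (cases "cty j"; cases "cty k") (auto simp: int_cos_cos int_sin_sin int_sin_cos cs)
  qed
  finally show ?thesis .
qed



definition MC :: "real measure" where "MC = restrict_space lborel circ"

lemma circ_sets[measurable]: "circ \<in> sets borel"
  unfolding circ_def by simp

lemma space_MC[simp]: "space MC = circ"
  unfolding MC_def by (simp add: space_restrict_space)


lemma meas_MC: "f \<in> borel_measurable borel \<Longrightarrow> f \<in> borel_measurable MC"
  unfolding MC_def by (simp add: measurable_restrict_space1)

lemma finite_MC: "finite_measure MC"
proof -
  have "emeasure lborel circ = ennreal (2*pi)" unfolding circ_def by simp
  then show ?thesis unfolding MC_def
    by (intro finite_measureI) (simp add: space_restrict_space emeasure_restrict_space)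
qed

interpretation MC: finite_measure MC by (rule finite_MC)

lemma coeff_MC: "coeff g j = integral\<^sup>L MC (\<lambda>x. g x * trig_basis j x)"
  unfolding coeff_def MC_def set_lebesgue_integral_def
  by (subst integral_restrict_space) auto

lemma LINT_MC: "(LINT x:circ|lborel. g x) = integral\<^sup>L MC (g::real\<Rightarrow>real)"
  unfolding MC_def set_lebesgue_integral_def
  by (subst integral_restrict_space) auto

lemma nn_MC: "(\<integral>\<^sup>+x\<in>circ. g x \<partial>lborel) = (\<integral>\<^sup>+x. g x \<partial>MC)"
  unfolding MC_def by (subst nn_integral_restrict_space) auto

lemma trig_basis_cont: "continuous_on A (trig_basis k)"
  unfolding trig_basis_alt by (cases "cty k") (auto intro!: continuous_intros)

lemma trig_basis_meas[measurable]: "trig_basis k \<in> borel_measurable borel"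
  unfolding trig_basis_def by measurable

lemma trig_basis_bound: "\<bar>trig_basis k x\<bar> \<le> 1 / sqrt pi"
proof -
  have a: "0 \<le> amp k" "amp k \<le> 1 / sqrt pi" unfolding amp_def by (auto simp: frac_le)
  have "\<bar>trig_basis k x\<bar> \<le> amp k * 1"
    unfolding trig_basis_alt abs_mult using a by (intro mult_mono) auto
  then show ?thesis using a by simp
qed

lemma bounded_integrable_MC:
  fixes f :: "real \<Rightarrow> real"
  assumes "f \<in> borel_measurable borel" "\<And>x. \<bar>f x\<bar> \<le> B"
  shows "integrable MC f"
  by (rule MC.integrable_const_bound[where B=B]) (use assms in \<open>auto intro: meas_MC\<close>)

lemma trig_integrable[simp]: "integrable MC (trig_basis k)"
  by (rule bounded_integrable_MC[OF trig_basis_meas trig_basis_bound])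

lemma trig_prod_integrable[simp]: "integrable MC (\<lambda>x. trig_basis j x * trig_basis k x)"
proof (rule bounded_integrable_MC)
  show "\<bar>trig_basis j x * trig_basis k x\<bar> \<le> (1/sqrt pi) * (1/sqrt pi)" for x
    unfolding abs_mult by (intro mult_mono trig_basis_bound) auto
qed auto

lemma trig_ortho_MC: "integral\<^sup>L MC (\<lambda>x. trig_basis j x * trig_basis k x) = (if j = k then 1 else 0)"
  using trig_ortho[of j k] unfolding LINT_MC .

lemma expansion_coeff:
  assumes "finite F"
  shows "integral\<^sup>L MC (\<lambda>x. (\<Sum>l\<in>F. c l * trig_basis l x) * trig_basis k x) = (if k \<in> F then c k else 0)"
proof -
  have "integral\<^sup>L MC (\<lambda>x. (\<Sum>l\<in>F. c l * trig_basis l x) * trig_basis k x)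
      = integral\<^sup>L MC (\<lambda>x. (\<Sum>l\<in>F. c l * (trig_basis l x * trig_basis k x)))"
    by (simp add: sum_distrib_right mult.assoc)
  also have "\<dots> = (\<Sum>l\<in>F. c l * (if l = k then 1 else 0))"
    by (simp add: trig_ortho_MC)
  also have "\<dots> = (if k \<in> F then c k else 0)"
    using assms by (simp add: if_distrib sum.delta cong: if_cong)
  finally show ?thesis .
qed

lemma coeff_expansion:
  assumes "finite F"
  shows "coeff (\<lambda>x. \<Sum>l\<in>F. c l * trig_basis l x) k = (if k \<in> F then c k else 0)"
  unfolding coeff_MC by (rule expansion_coeff[OF assms])

lemma one_div_sqrt_pi_le: "1 / sqrt pi \<le> 1"
proof -
  have "1 \<le> sqrt pi" using pi_gt3 by (simp add: real_le_rsqrt)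
  then show ?thesis by simp
qed

lemma L2_mult_integrable:
  fixes h :: "real \<Rightarrow> real"
  assumes h[measurable]: "h \<in> borel_measurable MC" and sq: "integrable MC (\<lambda>x. (h x)\<^sup>2)"
  shows "integrable MC (\<lambda>x. h x * trig_basis k x)"
proof -
  have i1: "integrable MC (\<lambda>x. (h x)\<^sup>2 + 1)" using sq by simp
  have m1: "(\<lambda>x. h x * trig_basis k x) \<in> borel_measurable MC"
    using h meas_MC[OF trig_basis_meas] by measurable
  have b1: "norm (h x * trig_basis k x) \<le> norm ((h x)\<^sup>2 + 1)" for x
  proof -
    have "\<bar>trig_basis k x\<bar> \<le> 1" using trig_basis_bound[of k x] one_div_sqrt_pi_le by linarith
    then have "\<bar>h x * trig_basis k x\<bar> \<le> \<bar>h x\<bar> * 1" unfolding abs_mult by (intro mult_left_mono) auto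
    also have "\<dots> \<le> (h x)\<^sup>2 + 1"
    proof (cases "\<bar>h x\<bar> \<le> 1")
      case True then show ?thesis by (simp add: add_increasing)
    next
      case False
      then have "\<bar>h x\<bar> * 1 \<le> \<bar>h x\<bar> * \<bar>h x\<bar>" by (intro mult_left_mono) auto
      then show ?thesis by (simp add: power2_eq_square)
    qed
    finally show ?thesis by simp
  qed
  show ?thesis
    by (rule Bochner_Integration.integrable_bound[OF i1 m1]) (intro AE_I2 b1)
qed

lemma bessel:
  fixes g :: "real \<Rightarrow> real"
  assumes gm[measurable]: "g \<in> borel_measurable borel" and F: "finite F"
  shows "ennreal (\<Sum>k\<in>F. (coeff g k - a k)\<^sup>2)
    \<le> (\<integral>\<^sup>+x\<in>circ. ennreal ((g x - (\<Sum>l\<in>F. a l * trig_basis l x))\<^sup>2) \<partial>lborel)"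
proof -
  define s where "s x = (\<Sum>l\<in>F. a l * trig_basis l x)" for x
  define h where "h x = g x - s x" for x
  have sm[measurable]: "s \<in> borel_measurable borel" unfolding s_def by measurable
  have hm[measurable]: "h \<in> borel_measurable borel" unfolding h_def by measurable
  have hmc: "h \<in> borel_measurable MC" by (rule meas_MC[OF hm])
  have h2mc: "(\<lambda>x. (h x)\<^sup>2) \<in> borel_measurable MC" using hmc by measurable
  show ?thesis
  proof (cases "(\<integral>\<^sup>+x. ennreal ((h x)\<^sup>2) \<partial>MC) = \<infinity>")
    case True
    then show ?thesis unfolding nn_MC h_def s_def by simp
  next
    case False
    then obtain r where r: "(\<integral>\<^sup>+x. ennreal ((h x)\<^sup>2) \<partial>MC) = ennreal r"
      using False by (cases "(\<integral>\<^sup>+x. ennreal ((h x)\<^sup>2) \<partial>MC)") auto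
    have sq: "integrable MC (\<lambda>x. (h x)\<^sup>2)"
      by (rule integrableI_nn_integral_finite[OF h2mc _ r]) auto
    have hphi: "integrable MC (\<lambda>x. h x * trig_basis k x)" for k
      by (rule L2_mult_integrable[OF hmc sq])
    have sphi: "integrable MC (\<lambda>x. s x * trig_basis k x)" for k
      unfolding s_def sum_distrib_right mult.assoc by (intro Bochner_Integration.integrable_sum) simp
    define b where "b k = integral\<^sup>L MC (\<lambda>x. h x * trig_basis k x)" for k
    have cg: "coeff g k = b k + a k" if "k \<in> F" for k
    proof -
      have "coeff g k = integral\<^sup>L MC (\<lambda>x. h x * trig_basis k x + s x * trig_basis k x)"
        unfolding coeff_MC h_def by (simp add: algebra_simps)
      also have "\<dots> = b k + integral\<^sup>L MC (\<lambda>x. s x * trig_basis k x)"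
        unfolding b_def by (rule Bochner_Integration.integral_add[OF hphi sphi])
      also have "integral\<^sup>L MC (\<lambda>x. s x * trig_basis k x) = a k"
        unfolding s_def using expansion_coeff[OF F, of a k] that by simp
      finally show ?thesis .
    qed
    define t where "t x = (\<Sum>k\<in>F. b k * trig_basis k x)" for x
    have ht: "integral\<^sup>L MC (\<lambda>x. h x * t x) = (\<Sum>k\<in>F. b k * b k)"
    proof -
      have "integral\<^sup>L MC (\<lambda>x. h x * t x) = integral\<^sup>L MC (\<lambda>x. \<Sum>k\<in>F. b k * (h x * trig_basis k x))"
        unfolding t_def sum_distrib_left by (simp add: ac_simps)
      also have "\<dots> = (\<Sum>k\<in>F. b k * b k)"
        by (subst Bochner_Integration.integral_sum) (auto simp: hphi b_def)
      finally show ?thesis .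
    qed
    have htint: "integrable MC (\<lambda>x. h x * t x)"
      unfolding t_def sum_distrib_left by (intro Bochner_Integration.integrable_sum) (simp add: ac_simps hphi)
    have tphi: "integrable MC (\<lambda>x. t x * trig_basis k x)" for k
      unfolding t_def sum_distrib_right mult.assoc by (intro Bochner_Integration.integrable_sum) simp
    have e: "t x * t x = (\<Sum>k\<in>F. b k * (t x * trig_basis k x))" for x
    proof -
      have "t x * t x = (\<Sum>k\<in>F. b k * trig_basis k x) * t x" by (simp add: t_def)
      also have "\<dots> = (\<Sum>k\<in>F. b k * (t x * trig_basis k x))" by (simp add: sum_distrib_left sum_distrib_right ac_simps)
      finally show ?thesis .
    qed
    have tt: "integral\<^sup>L MC (\<lambda>x. t x * t x) = (\<Sum>k\<in>F. b k * b k)"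
    proof -
      have "integral\<^sup>L MC (\<lambda>x. t x * t x) = integral\<^sup>L MC (\<lambda>x. \<Sum>k\<in>F. b k * (t x * trig_basis k x))"
        by (simp only: e)
      also have "\<dots> = (\<Sum>k\<in>F. b k * integral\<^sup>L MC (\<lambda>x. t x * trig_basis k x))"
        by (subst Bochner_Integration.integral_sum) (auto simp: tphi)
      also have "\<dots> = (\<Sum>k\<in>F. b k * b k)"
        unfolding t_def using expansion_coeff[OF F, of b] by simp
      finally show ?thesis .
    qed
    have ttint: "integrable MC (\<lambda>x. t x * t x)"
      unfolding e by (intro Bochner_Integration.integrable_sum) (simp add: tphi)
    have "0 \<le> integral\<^sup>L MC (\<lambda>x. (h x - t x)\<^sup>2)"
      by (rule integral_nonneg_AE) simp
    also have "integral\<^sup>L MC (\<lambda>x. (h x - t x)\<^sup>2) = integral\<^sup>L MC (\<lambda>x. (h x)\<^sup>2 - 2 * (h x * t x) + t x * t x)"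
      by (rule Bochner_Integration.integral_cong) (auto simp: power2_eq_square algebra_simps)
    also have "\<dots> = integral\<^sup>L MC (\<lambda>x. (h x)\<^sup>2) - 2 * integral\<^sup>L MC (\<lambda>x. h x * t x) + integral\<^sup>L MC (\<lambda>x. t x * t x)"
      proof -
        have i2: "integrable MC (\<lambda>x. 2 * (h x * t x))" using htint by simp
        have "integral\<^sup>L MC (\<lambda>x. (h x)\<^sup>2 - 2 * (h x * t x) + t x * t x)
          = integral\<^sup>L MC (\<lambda>x. (h x)\<^sup>2 - 2 * (h x * t x)) + integral\<^sup>L MC (\<lambda>x. t x * t x)"
          by (rule Bochner_Integration.integral_add[OF Bochner_Integration.integrable_diff[OF sq i2] ttint])
        also have "integral\<^sup>L MC (\<lambda>x. (h x)\<^sup>2 - 2 * (h x * t x)) = integral\<^sup>L MC (\<lambda>x. (h x)\<^sup>2) - integral\<^sup>L MC (\<lambda>x. 2 * (h x * t x))"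
          by (rule Bochner_Integration.integral_diff[OF sq i2])
        finally show ?thesis by simp
      qed
    finally have le: "(\<Sum>k\<in>F. b k * b k) \<le> integral\<^sup>L MC (\<lambda>x. (h x)\<^sup>2)"
      unfolding ht tt by simp
    have "(\<Sum>k\<in>F. (coeff g k - a k)\<^sup>2) = (\<Sum>k\<in>F. b k * b k)"
      by (rule sum.cong) (auto simp: cg power2_eq_square)
    then have "ennreal (\<Sum>k\<in>F. (coeff g k - a k)\<^sup>2) \<le> ennreal (integral\<^sup>L MC (\<lambda>x. (h x)\<^sup>2))"
      using le by (simp add: ennreal_leI)
    also have "\<dots> = (\<integral>\<^sup>+x. ennreal ((h x)\<^sup>2) \<partial>MC)"
      by (rule nn_integral_eq_integral[symmetric, OF sq]) auto
    finally show ?thesis unfolding nn_MC h_def s_def .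
  qed
qed



definition th :: "nat set \<Rightarrow> nat \<Rightarrow> real" where "th S k = (if k \<in> S then 1 else -1)"
definition acoef :: "real \<Rightarrow> nat set \<Rightarrow> nat \<Rightarrow> real" where
  "acoef \<gamma> S k = (if k = 0 then 1 / sqrt (2*pi) else \<gamma> * th S k)"
definition fS :: "real \<Rightarrow> nat \<Rightarrow> nat set \<Rightarrow> real \<Rightarrow> real" where
  "fS \<gamma> m S x = (\<Sum>k\<in>{..m}. acoef \<gamma> S k * trig_basis k x)"

lemma th_abs[simp]: "\<bar>th S k\<bar> = 1" unfolding th_def by auto
lemma th_sq[simp]: "(th S k)\<^sup>2 = 1" unfolding th_def by auto

lemma fS_meas[measurable]: "fS \<gamma> m S \<in> borel_measurable borel"
  unfolding fS_def by measurable

lemma fS_alt: "fS \<gamma> m S x = 1 / (2*pi) + \<gamma> * (\<Sum>k\<in>{1..m}. th S k * trig_basis k x)"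
proof -
  have "{..m} = insert 0 {1..m}" by auto
  then have "fS \<gamma> m S x = acoef \<gamma> S 0 * trig_basis 0 x + (\<Sum>k\<in>{1..m}. acoef \<gamma> S k * trig_basis k x)"
    unfolding fS_def by simp
  also have "acoef \<gamma> S 0 * trig_basis 0 x = 1 / (2*pi)"
    unfolding acoef_def trig_basis_def by (simp add: real_sqrt_mult[symmetric])
  also have "(\<Sum>k\<in>{1..m}. acoef \<gamma> S k * trig_basis k x) = \<gamma> * (\<Sum>k\<in>{1..m}. th S k * trig_basis k x)"
    unfolding acoef_def by (simp add: sum_distrib_left ac_simps)
  finally show ?thesis .
qed

lemma pert_bound: "\<bar>\<Sum>k\<in>{1..m}. th S k * trig_basis k x\<bar> \<le> real m / sqrt pi"
proof -
  have "\<bar>\<Sum>k\<in>{1..m}. th S k * trig_basis k x\<bar> \<le> (\<Sum>k\<in>{1..m}. \<bar>th S k * trig_basis k x\<bar>)"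
    by (rule sum_abs)
  also have "\<dots> \<le> (\<Sum>k\<in>{1..m}. 1 / sqrt pi)"
    by (intro sum_mono) (simp add: abs_mult trig_basis_bound)
  finally show ?thesis by simp
qed

definition good :: "real \<Rightarrow> nat \<Rightarrow> bool" where
  "good \<gamma> m \<longleftrightarrow> 0 \<le> \<gamma> \<and> 2 * pi * \<gamma> * real m / sqrt pi \<le> 1/2"

lemma good_pert:
  assumes "good \<gamma> m"
  shows "\<bar>2 * pi * \<gamma> * (\<Sum>k\<in>{1..m}. th S k * trig_basis k x)\<bar> \<le> 1/2"
proof -
  have "\<bar>2 * pi * \<gamma> * (\<Sum>k\<in>{1..m}. th S k * trig_basis k x)\<bar> = 2 * pi * \<gamma> * \<bar>\<Sum>k\<in>{1..m}. th S k * trig_basis k x\<bar>"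
    using assms unfolding good_def by (simp add: abs_mult)
  also have "\<dots> \<le> 2 * pi * \<gamma> * (real m / sqrt pi)"
    using assms unfolding good_def by (intro mult_left_mono pert_bound) auto
  also have "\<dots> \<le> 1/2" using assms unfolding good_def by simp
  finally show ?thesis .
qed

lemma fS_ratio_bounds:
  assumes "good \<gamma> m"
  shows "1/2 \<le> 2 * pi * fS \<gamma> m S x" "2 * pi * fS \<gamma> m S x \<le> 3/2"
proof -
  have e: "2 * pi * fS \<gamma> m S x = 1 + 2 * pi * \<gamma> * (\<Sum>k\<in>{1..m}. th S k * trig_basis k x)"
    unfolding fS_alt by (simp add: algebra_simps)
  show "1/2 \<le> 2 * pi * fS \<gamma> m S x" "2 * pi * fS \<gamma> m S x \<le> 3/2"
    using good_pert[OF assms, of S x] unfolding e by (auto simp: abs_le_iff)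
qed

lemma fS_nonneg: "good \<gamma> m \<Longrightarrow> 0 \<le> fS \<gamma> m S x"
  proof -
  assume g: "good \<gamma> m"
  have "0 \<le> (2 * pi) * fS \<gamma> m S x" using fS_ratio_bounds(1)[OF g, of S x] by linarith
  then show ?thesis using pi_gt_zero by (simp add: zero_le_mult_iff)
qed

lemma fS_le1: "good \<gamma> m \<Longrightarrow> \<bar>fS \<gamma> m S x\<bar> \<le> 1"
proof -
  assume g: "good \<gamma> m"
  have "2 * pi * fS \<gamma> m S x \<le> 3/2" by (rule fS_ratio_bounds(2)[OF g])
  then have "fS \<gamma> m S x \<le> 3/2 / (2*pi)" by (simp add: field_simps)
  also have "\<dots> \<le> 1" using pi_gt3 by (simp add: field_simps)
  finally show ?thesis using fS_nonneg[OF g, of S x] by simp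
qed

lemma coeff_fS: "coeff (fS \<gamma> m S) j = (if j \<le> m then acoef \<gamma> S j else 0)"
  unfolding fS_def[abs_def] by (subst coeff_expansion) auto

lemma integral_fS: "integral\<^sup>L MC (fS \<gamma> m S) = 1"
proof -
  have "integral\<^sup>L MC (fS \<gamma> m S) = sqrt (2*pi) * integral\<^sup>L MC (\<lambda>x. fS \<gamma> m S x * trig_basis 0 x)"
    by (simp add: trig_basis_def)
  also have "integral\<^sup>L MC (\<lambda>x. fS \<gamma> m S x * trig_basis 0 x) = acoef \<gamma> S 0"
    using coeff_fS[of \<gamma> m S 0] unfolding coeff_MC by simp
  finally show ?thesis by (simp add: acoef_def)
qed

lemma fS_integrable: "good \<gamma> m \<Longrightarrow> integrable MC (fS \<gamma> m S)"
  by (rule bounded_integrable_MC[OF fS_meas fS_le1])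

lemma fS_density:
  assumes "good \<gamma> m"
  shows "is_density (fS \<gamma> m S)"
proof -
  have "(\<integral>\<^sup>+x\<in>circ. ennreal (fS \<gamma> m S x) \<partial>lborel) = (\<integral>\<^sup>+x. ennreal (fS \<gamma> m S x) \<partial>MC)"
    by (rule nn_MC)
  also have "\<dots> = ennreal (integral\<^sup>L MC (fS \<gamma> m S))"
    by (rule nn_integral_eq_integral[OF fS_integrable[OF assms]]) (simp add: fS_nonneg[OF assms])
  also have "\<dots> = 1" by (simp add: integral_fS)
  finally show ?thesis unfolding is_density_def using fS_nonneg[OF assms] by simp
qed

lemma sob_weight_bound:
  assumes "\<beta> > 0" "1 \<le> j" "j \<le> m"
  shows "(sob_weight \<beta> j)\<^sup>2 \<le> ((real m + 1) powr \<beta>)\<^sup>2"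
proof -
  have "0 \<le> sob_weight \<beta> j" unfolding sob_weight_def by auto
  moreover have "sob_weight \<beta> j \<le> (real m + 1) powr \<beta>"
    unfolding sob_weight_def using assms by (auto intro!: powr_mono2)
  ultimately show ?thesis by (intro power_mono) auto
qed

lemma fS_sobolev:
  assumes g: "good \<gamma> m" and b: "\<beta> > 0"
    and c: "real m * ((real m + 1) powr \<beta>)\<^sup>2 * \<gamma>\<^sup>2 < R\<^sup>2 / pi powr (2*\<beta>)"
  shows "fS \<gamma> m S \<in> sobolev \<beta> R"
proof -
  have m1: "fS \<gamma> m S \<in> borel_measurable lborel" by simp
  have i1: "set_integrable lborel circ (\<lambda>x. (fS \<gamma> m S x)\<^sup>2)"
  proof -
    have "integrable MC (\<lambda>x. (fS \<gamma> m S x)\<^sup>2)"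
    proof (rule bounded_integrable_MC[where B=1])
      show "\<bar>(fS \<gamma> m S x)\<^sup>2\<bar> \<le> 1" for x
        using fS_le1[OF g, of S x] by (simp add: abs_square_le_1)
    qed simp
    then show ?thesis unfolding MC_def by (subst set_integrable_eq) auto
  qed
  define t where "t j = (sob_weight \<beta> j)\<^sup>2 * (coeff (fS \<gamma> m S) j)\<^sup>2" for j
  have t0: "t 0 = 0" unfolding t_def sob_weight_def by simp
  have tn: "t j = 0" if "j \<notin> {..m}" for j using that unfolding t_def coeff_fS by simp
  have tle: "t j \<le> ((real m + 1) powr \<beta>)\<^sup>2 * \<gamma>\<^sup>2" if "j \<in> {1..m}" for j
  proof -
    have "(coeff (fS \<gamma> m S) j)\<^sup>2 = \<gamma>\<^sup>2" using that unfolding coeff_fS acoef_def by (simp add: power_mult_distrib)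
    then show ?thesis unfolding t_def using sob_weight_bound[OF b, of j m] that by (auto intro: mult_right_mono)
  qed
  have tnn: "0 \<le> t j" for j unfolding t_def by simp
  have "(\<Sum>j\<in>{..m}. t j) = (\<Sum>j\<in>{1..m}. t j)"
  proof -
    have "{..m} = insert 0 {1..m}" by auto
    then show ?thesis using t0 by simp
  qed
  also have "(\<Sum>j\<in>{1..m}. t j) \<le> (\<Sum>j\<in>{1..m}. ((real m + 1) powr \<beta>)\<^sup>2 * \<gamma>\<^sup>2)"
    by (rule sum_mono) (rule tle)
  also have "\<dots> = real m * ((real m + 1) powr \<beta>)\<^sup>2 * \<gamma>\<^sup>2" by simp
  finally have sle: "(\<Sum>j\<in>{..m}. t j) < R\<^sup>2 / pi powr (2*\<beta>)" using c by linarith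
  have "(\<Sum>j. ennreal (t j)) = (\<Sum>j\<in>{..m}. ennreal (t j))"
    by (rule suminf_finite) (auto simp: tn)
  also have "\<dots> = ennreal (\<Sum>j\<in>{..m}. t j)" using tnn by simp
  also have "\<dots> < ennreal (R\<^sup>2 / pi powr (2*\<beta>))"
    proof (rule ennreal_lessI)
      have "0 \<le> (\<Sum>j\<in>{..m}. t j)" by (rule sum_nonneg) (rule tnn)
      then show "0 < R\<^sup>2 / pi powr (2*\<beta>)" using sle by linarith
    qed (rule sle)
  finally have "(\<Sum>j. ennreal (t j)) < ennreal (R\<^sup>2 / pi powr (2*\<beta>))" .
  then have "(\<Sum>j. ennreal ((sob_weight \<beta> j)\<^sup>2 * (coeff (fS \<gamma> m S) j)\<^sup>2)) < ennreal (R\<^sup>2 / pi powr (2*\<beta>))"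
    unfolding t_def .
  with m1 i1 show ?thesis unfolding sobolev_def by blast
qed



definition gmap :: "real \<times> real \<times> real \<Rightarrow> real \<times> real \<times> real" where
  "gmap = (\<lambda>(x, (l, u)). (if x \<in> circ_interval l u then x else -pi, l, u))"

lemma obs_law_gmap: "obs_law Q f = distr (X_law f \<Otimes>\<^sub>M Q) borel gmap"
  unfolding obs_law_def gmap_def ..

lemma circ_interval_iff: "x \<in> circ_interval l u \<longleftrightarrow>
   (0 \<le> x \<and> x < 2*pi \<and> (if l \<le> u then l \<le> x \<and> x \<le> u else l \<le> x \<or> x \<le> u))"
  unfolding circ_interval_def circ_def by auto

lemma borel_triple: "(borel :: (real \<times> real \<times> real) measure) = borel \<Otimes>\<^sub>M (borel \<Otimes>\<^sub>M borel)"
  by (simp add: borel_prod)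

lemma gmap_meas: "gmap \<in> measurable borel borel"
proof -
  have "(\<lambda>z::real \<times> real \<times> real. (if (0 \<le> fst z \<and> fst z < 2*pi \<and> (if fst (snd z) \<le> snd (snd z) then fst (snd z) \<le> fst z \<and> fst z \<le> snd (snd z) else fst (snd z) \<le> fst z \<or> fst z \<le> snd (snd z))) then fst z else -pi, fst (snd z), snd (snd z)))
     \<in> measurable (borel \<Otimes>\<^sub>M (borel \<Otimes>\<^sub>M borel)) (borel \<Otimes>\<^sub>M (borel \<Otimes>\<^sub>M borel))"
    by measurable
  moreover have "gmap = (\<lambda>z::real \<times> real \<times> real. (if (0 \<le> fst z \<and> fst z < 2*pi \<and> (if fst (snd z) \<le> snd (snd z) then fst (snd z) \<le> fst z \<and> fst z \<le> snd (snd z) else fst (snd z) \<le> fst z \<or> fst z \<le> snd (snd z))) then fst z else -pi, fst (snd z), snd (snd z)))"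
    unfolding gmap_def circ_interval_iff by (auto simp: fun_eq_iff split: prod.splits)
  ultimately show ?thesis unfolding borel_triple[symmetric] by simp
qed

definition f0 :: "real \<Rightarrow> real" where "f0 x = 1 / (2*pi)"

definition mu :: "(real \<times> real) measure \<Rightarrow> (real \<times> real \<times> real) measure" where
  "mu Q = X_law f0 \<Otimes>\<^sub>M Q"

lemma sets_X_law[simp]: "sets (X_law f) = sets borel"
  unfolding X_law_def by simp

lemma space_X_law[simp]: "space (X_law f) = UNIV"
  unfolding X_law_def by simp

lemma X_law_prob: "is_density f \<Longrightarrow> prob_space (X_law f)"
proof (rule prob_spaceI)
  assume d: "is_density f"
  have "emeasure (X_law f) (space (X_law f)) = (\<integral>\<^sup>+x. ennreal (f x) * indicator circ x \<partial>lborel)"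
    using d unfolding X_law_def is_density_def by (subst emeasure_density) auto
  also have "\<dots> = 1" using d unfolding is_density_def by simp
  finally show "emeasure (X_law f) (space (X_law f)) = 1" .
qed

lemma is_density_f0: "is_density f0"
proof -
  have "(\<integral>\<^sup>+x\<in>circ. ennreal (f0 x) \<partial>lborel) = ennreal (1/(2*pi)) * emeasure lborel circ"
    unfolding f0_def by (simp add: nn_integral_cmult_indicator)
  also have "emeasure lborel circ = ennreal (2*pi)" unfolding circ_def by simp
  also have "ennreal (1/(2*pi)) * ennreal (2*pi) = 1" by (simp add: ennreal_mult''[symmetric])
  finally show ?thesis unfolding is_density_def f0_def by simp
qed

lemma X_law_rel:
  assumes [measurable]: "f \<in> borel_measurable borel" and nn: "\<And>x. 0 \<le> f x"
  shows "X_law f = density (X_law f0) (\<lambda>x. ennreal (2*pi * f x))"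
proof -
  have "density (X_law f0) (\<lambda>x. ennreal (2*pi * f x)) = density lborel (\<lambda>x. ennreal (f0 x) * indicator circ x * ennreal (2*pi * f x))"
    unfolding X_law_def by (subst density_density_eq) (auto simp: f0_def)
  also have "(\<lambda>x. ennreal (f0 x) * indicator circ x * ennreal (2*pi * f x)) = (\<lambda>x. ennreal (f x) * indicator circ x)"
    by (auto simp: fun_eq_iff f0_def ennreal_mult''[symmetric] nn split: split_indicator)
  finally show ?thesis unfolding X_law_def ..
qed

lemma Mf_density:
  assumes Q: "censoring_law Q" and [measurable]: "f \<in> borel_measurable borel" and nn: "\<And>x. 0 \<le> f x"
  shows "X_law f \<Otimes>\<^sub>M Q = density (mu Q) (\<lambda>z. ennreal (2*pi * f (fst z)))"
proof -
  have pQ: "prob_space Q" using Q unfolding censoring_law_def by simp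
  then have sQ: "sigma_finite_measure Q" by (rule prob_space_imp_sigma_finite)
  have "X_law f \<Otimes>\<^sub>M Q = density (X_law f0) (\<lambda>x. ennreal (2*pi * f x)) \<Otimes>\<^sub>M density Q (\<lambda>_. 1)"
    by (simp add: X_law_rel[OF _ nn] density_1)
  also have "\<dots> = density (X_law f0 \<Otimes>\<^sub>M Q) (\<lambda>(x,y). ennreal (2*pi * f x) * 1)"
    by (rule pair_measure_density) (auto simp: sQ density_1 measurable_cong_sets[OF sets_X_law refl])
  also have "\<dots> = density (mu Q) (\<lambda>z. ennreal (2*pi * f (fst z)))"
    unfolding mu_def by (simp add: case_prod_beta')
  finally show ?thesis .
qed

lemma PiM_density:
  assumes fin: "finite I" and M: "prob_space M" and rho[measurable]: "rho \<in> borel_measurable M"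
    and D: "prob_space (density M rho)"
  shows "PiM I (\<lambda>_. density M rho) = density (PiM I (\<lambda>_. M)) (\<lambda>\<omega>. \<Prod>i\<in>I. rho (\<omega> i))"
proof -
  interpret D: prob_space "density M rho" by (rule D)
  interpret M: prob_space M by (rule M)
  interpret PD: product_sigma_finite "\<lambda>_. density M rho"
    by (simp add: product_sigma_finite_def D.sigma_finite_measure_axioms)
  interpret PM: product_sigma_finite "\<lambda>_. M"
    by (simp add: product_sigma_finite_def M.sigma_finite_measure_axioms)
  have sets_eq: "sets (PiM I (\<lambda>_. density M rho)) = sets (PiM I (\<lambda>_. M))"
    by (intro sets_PiM_cong) auto
  have "density (PiM I (\<lambda>_. M)) (\<lambda>\<omega>. \<Prod>i\<in>I. rho (\<omega> i)) = PiM I (\<lambda>_. density M rho)"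
  proof (rule PD.PiM_eqI[OF fin])
    show "sets (density (PiM I (\<lambda>_. M)) (\<lambda>\<omega>. \<Prod>i\<in>I. rho (\<omega> i))) = sets (PiM I (\<lambda>_. density M rho))"
      using sets_eq by simp
    fix A assume A: "\<And>i. i \<in> I \<Longrightarrow> A i \<in> sets (density M rho)"
    then have A': "\<And>i. i \<in> I \<Longrightarrow> A i \<in> sets M" by simp
    have "emeasure (density (PiM I (\<lambda>_. M)) (\<lambda>\<omega>. \<Prod>i\<in>I. rho (\<omega> i))) (Pi\<^sub>E I A)
        = (\<integral>\<^sup>+\<omega>. (\<Prod>i\<in>I. rho (\<omega> i)) * indicator (Pi\<^sub>E I A) \<omega> \<partial>PiM I (\<lambda>_. M))"
      using A' by (subst emeasure_density) (auto intro!: sets_PiM_I_finite fin)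
    also have "\<dots> = (\<integral>\<^sup>+\<omega>. (\<Prod>i\<in>I. rho (\<omega> i) * indicator (A i) (\<omega> i)) \<partial>PiM I (\<lambda>_. M))"
    proof (rule nn_integral_cong)
      fix \<omega> assume "\<omega> \<in> space (PiM I (\<lambda>_. M))"
      then have ext: "\<omega> \<in> extensional I" by (simp add: space_PiM PiE_def)
      show "(\<Prod>i\<in>I. rho (\<omega> i)) * indicator (Pi\<^sub>E I A) \<omega> = (\<Prod>i\<in>I. rho (\<omega> i) * indicator (A i) (\<omega> i))"
      proof (cases "\<forall>i\<in>I. \<omega> i \<in> A i")
        case True
        then have "\<omega> \<in> Pi\<^sub>E I A" using ext by (simp add: PiE_def Pi_def)
        then show ?thesis using True by (simp add: indicator_def)
      next
        case False
        then obtain j where j: "j \<in> I" "\<omega> j \<notin> A j" by auto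
        then have "\<omega> \<notin> Pi\<^sub>E I A" by (auto simp: PiE_def)
        moreover have "(\<Prod>i\<in>I. rho (\<omega> i) * indicator (A i) (\<omega> i)) = 0"
          using j fin by (intro prod_zero bexI[of _ j]) auto
        ultimately show ?thesis by simp
      qed
    qed
    also have "\<dots> = (\<Prod>i\<in>I. (\<integral>\<^sup>+x. rho x * indicator (A i) x \<partial>M))"
      using A' by (subst PM.product_nn_integral_prod[OF fin]) auto
    also have "\<dots> = (\<Prod>i\<in>I. emeasure (density M rho) (A i))"
      using A' by (intro prod.cong refl) (simp add: emeasure_density)
    finally show "emeasure (density (PiM I (\<lambda>_. M)) (\<lambda>\<omega>. \<Prod>i\<in>I. rho (\<omega> i))) (Pi\<^sub>E I A) = (\<Prod>i\<in>I. emeasure (density M rho) (A i))" .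
  qed
  then show ?thesis ..
qed

lemma sets_XQ:
  assumes Q: "censoring_law Q"
  shows "sets (X_law f \<Otimes>\<^sub>M Q) = sets (borel :: (real \<times> real \<times> real) measure)"
proof -
  have "sets (X_law f \<Otimes>\<^sub>M Q) = sets ((borel :: real measure) \<Otimes>\<^sub>M (borel :: (real \<times> real) measure))"
    using Q unfolding censoring_law_def by (intro sets_pair_measure_cong) auto
  then show ?thesis by (simp only: borel_prod)
qed

lemma prob_XQ:
  assumes Q: "censoring_law Q" and d: "is_density f"
  shows "prob_space (X_law f \<Otimes>\<^sub>M Q)"
proof -
  interpret X: prob_space "X_law f" by (rule X_law_prob[OF d])
  interpret Q: prob_space Q using Q unfolding censoring_law_def by simp
  interpret XQ: pair_prob_space "X_law f" Q ..
  show ?thesis by (rule XQ.prob_space_axioms)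
qed

lemma sets_obs[simp]: "sets (obs_law Q f) = sets borel"
  unfolding obs_law_gmap by simp

lemma gmap_meas_XQ:
  assumes Q: "censoring_law Q"
  shows "gmap \<in> measurable (X_law f \<Otimes>\<^sub>M Q) (obs_law Q' f')"
  using gmap_meas by (simp add: measurable_cong_sets[OF sets_XQ[OF Q] sets_obs])

lemma obs_prob:
  assumes Q: "censoring_law Q" and d: "is_density f"
  shows "prob_space (obs_law Q f)"
proof -
  interpret XQ: prob_space "X_law f \<Otimes>\<^sub>M Q" by (rule prob_XQ[OF Q d])
  show ?thesis unfolding obs_law_gmap
    by (rule XQ.prob_space_distr) (simp add: measurable_cong_sets[OF sets_XQ[OF Q] refl] gmap_meas)
qed

lemma sample_law_eq:
  assumes Q: "censoring_law Q" and d: "is_density f"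
  shows "sample_law Q f n = distr (PiM {..<n} (\<lambda>_. X_law f \<Otimes>\<^sub>M Q)) (PiM {..<n} (\<lambda>_. obs_law Q f)) (compose {..<n} gmap)"
proof -
  have "distr (PiM {..<n} (\<lambda>_. X_law f \<Otimes>\<^sub>M Q)) (PiM {..<n} (\<lambda>_. obs_law Q f)) (compose {..<n} gmap)
     = PiM {..<n} (\<lambda>i. distr (X_law f \<Otimes>\<^sub>M Q) (obs_law Q f) gmap)"
    by (rule distr_PiM_finite_prob_space') (auto simp: prob_XQ[OF Q d] obs_prob[OF Q d] gmap_meas_XQ[OF Q])
  also have "(\<lambda>i. distr (X_law f \<Otimes>\<^sub>M Q) (obs_law Q f) gmap) = (\<lambda>i. obs_law Q f)"
    by (rule ext) (simp add: obs_law_gmap[of Q f] cong: distr_cong)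
  finally show ?thesis unfolding sample_law_def ..
qed

definition Hrisk :: "((nat \<Rightarrow> real \<times> real \<times> real) \<Rightarrow> real \<Rightarrow> real) \<Rightarrow> (real \<Rightarrow> real) \<Rightarrow> (nat \<Rightarrow> real \<times> real \<times> real) \<Rightarrow> ennreal" where
  "Hrisk fh f \<omega> = (\<integral>\<^sup>+x\<in>circ. ennreal ((fh \<omega> x - f x)\<^sup>2) \<partial>lborel)"

lemma Hrisk_meas:
  assumes fh: "fh \<in> estimators n" and [measurable]: "f \<in> borel_measurable borel"
  shows "Hrisk fh f \<in> borel_measurable (PiM {..<n} (\<lambda>_. (borel :: (real \<times> real \<times> real) measure)))"
proof -
  have [measurable]: "(\<lambda>(\<omega>, x). fh \<omega> x) \<in> borel_measurable (PiM {..<n} (\<lambda>_. (borel :: (real \<times> real \<times> real) measure)) \<Otimes>\<^sub>M lborel)"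
    using fh unfolding estimators_def by simp
  have "(\<lambda>(\<omega>, x). ennreal ((fh \<omega> x - f x)\<^sup>2) * indicator circ x) \<in> borel_measurable (PiM {..<n} (\<lambda>_. (borel :: (real \<times> real \<times> real) measure)) \<Otimes>\<^sub>M lborel)"
    by measurable
  then show ?thesis unfolding Hrisk_def[abs_def]
    by (rule lborel.borel_measurable_nn_integral)
qed

lemma risk_eq:
  assumes Q: "censoring_law Q" and d: "is_density f" and fm[measurable]: "f \<in> borel_measurable borel"
    and nn: "\<And>x. 0 \<le> f x" and fh: "fh \<in> estimators n"
  shows "risk Q n fh f = (\<integral>\<^sup>+\<omega>. (\<Prod>i\<in>{..<n}. ennreal (2*pi * f (fst (\<omega> i)))) * Hrisk fh f (compose {..<n} gmap \<omega>) \<partial>PiM {..<n} (\<lambda>_. mu Q))"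
proof -
  have pmu: "prob_space (mu Q)" unfolding mu_def by (rule prob_XQ[OF Q is_density_f0])
  have sets_mu: "sets (mu Q) = sets borel" unfolding mu_def by (rule sets_XQ[OF Q])
  have rho[measurable]: "(\<lambda>z. ennreal (2*pi * f (fst z))) \<in> borel_measurable (mu Q)"
  proof -
    have m1: "(\<lambda>z::real\<times>real\<times>real. ennreal (2*pi * f (fst z))) \<in> borel_measurable ((borel::real measure) \<Otimes>\<^sub>M (borel :: (real\<times>real) measure))"
      by measurable
    have s1: "sets (mu Q) = sets ((borel::real measure) \<Otimes>\<^sub>M (borel :: (real\<times>real) measure))"
      unfolding sets_mu by (simp only: borel_prod)
    show ?thesis unfolding measurable_cong_sets[OF s1 refl] by (rule m1)
  qed
  have Mf: "X_law f \<Otimes>\<^sub>M Q = density (mu Q) (\<lambda>z. ennreal (2*pi * f (fst z)))"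
    by (rule Mf_density[OF Q fm nn])
  have cm: "compose {..<n} gmap \<in> measurable (PiM {..<n} (\<lambda>_. X_law f \<Otimes>\<^sub>M Q)) (PiM {..<n} (\<lambda>_. obs_law Q f))"
    using gmap_meas_XQ[OF Q] unfolding compose_def by measurable
  have Hm: "Hrisk fh f \<in> borel_measurable (distr (PiM {..<n} (\<lambda>_. X_law f \<Otimes>\<^sub>M Q)) (PiM {..<n} (\<lambda>_. obs_law Q f)) (compose {..<n} gmap))"
  proof -
    have s2: "sets (PiM {..<n} (\<lambda>_. obs_law Q f)) = sets (PiM {..<n} (\<lambda>_. (borel :: (real \<times> real \<times> real) measure)))"
      by (intro sets_PiM_cong) auto
    show ?thesis unfolding measurable_cong_sets[OF sets_distr refl] measurable_cong_sets[OF s2 refl] by (rule Hrisk_meas[OF fh fm])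
  qed
  have "risk Q n fh f = (\<integral>\<^sup>+\<omega>. Hrisk fh f \<omega> \<partial>sample_law Q f n)"
    unfolding risk_def Hrisk_def ..
  also have "\<dots> = (\<integral>\<^sup>+\<omega>. Hrisk fh f (compose {..<n} gmap \<omega>) \<partial>PiM {..<n} (\<lambda>_. X_law f \<Otimes>\<^sub>M Q))"
    unfolding sample_law_eq[OF Q d] by (rule nn_integral_distr[OF cm Hm])
  also have "PiM {..<n} (\<lambda>_. X_law f \<Otimes>\<^sub>M Q) = density (PiM {..<n} (\<lambda>_. mu Q)) (\<lambda>\<omega>. \<Prod>i\<in>{..<n}. ennreal (2*pi * f (fst (\<omega> i))))"
    unfolding Mf by (rule PiM_density) (auto simp: pmu rho Mf[symmetric] prob_XQ[OF Q d])
  also have "(\<integral>\<^sup>+\<omega>. Hrisk fh f (compose {..<n} gmap \<omega>) \<partial>density (PiM {..<n} (\<lambda>_. mu Q)) (\<lambda>\<omega>. \<Prod>i\<in>{..<n}. ennreal (2*pi * f (fst (\<omega> i)))))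
     = (\<integral>\<^sup>+\<omega>. (\<Prod>i\<in>{..<n}. ennreal (2*pi * f (fst (\<omega> i)))) * Hrisk fh f (compose {..<n} gmap \<omega>) \<partial>PiM {..<n} (\<lambda>_. mu Q))"
  proof (rule nn_integral_density)
    show "(\<lambda>\<omega>. \<Prod>i\<in>{..<n}. ennreal (2*pi * f (fst (\<omega> i)))) \<in> borel_measurable (PiM {..<n} (\<lambda>_. mu Q))"
      by measurable
    have "compose {..<n} gmap \<in> measurable (PiM {..<n} (\<lambda>_. mu Q)) (PiM {..<n} (\<lambda>_. obs_law Q f))"
      proof -
        have s3: "sets (PiM {..<n} (\<lambda>_. mu Q)) = sets (PiM {..<n} (\<lambda>_. X_law f \<Otimes>\<^sub>M Q))"
          by (rule sets_PiM_cong[OF refl]) (simp only: sets_mu sets_XQ[OF Q])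
        show ?thesis unfolding measurable_cong_sets[OF s3 refl] by (rule cm)
      qed
    then show "(\<lambda>\<omega>. Hrisk fh f (compose {..<n} gmap \<omega>)) \<in> borel_measurable (PiM {..<n} (\<lambda>_. mu Q))"
      by (rule measurable_compose[OF _ Hm[unfolded measurable_cong_sets[OF sets_distr refl]]])
  qed
  finally show ?thesis .
qed



definition flip :: "nat set \<Rightarrow> nat \<Rightarrow> nat set" where
  "flip S k = (if k \<in> S then S - {k} else insert k S)"

lemma flip_flip[simp]: "flip (flip S k) k = S"
  unfolding flip_def by auto

lemma flip_Pow: "k \<in> K \<Longrightarrow> S \<in> Pow K \<Longrightarrow> flip S k \<in> Pow K"
  unfolding flip_def by auto

lemma th_flip_same: "j \<noteq> k \<Longrightarrow> th (flip S k) j = th S j"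
  unfolding flip_def th_def by auto

lemma th_flip: "th (flip S k) k = - th S k"
  unfolding flip_def th_def by auto

lemma assouad_pair:
  fixes d1 d2 :: "'a \<Rightarrow> ennreal" and c :: "'a \<Rightarrow> real"
  assumes [measurable]: "d1 \<in> borel_measurable M" "d2 \<in> borel_measurable M" "c \<in> borel_measurable M"
  shows "ennreal (2 * \<gamma>\<^sup>2) * (\<integral>\<^sup>+\<omega>. min (d1 \<omega>) (d2 \<omega>) \<partial>M)
    \<le> (\<integral>\<^sup>+\<omega>. d1 \<omega> * ennreal ((c \<omega> - \<gamma>)\<^sup>2) \<partial>M) + (\<integral>\<^sup>+\<omega>. d2 \<omega> * ennreal ((c \<omega> + \<gamma>)\<^sup>2) \<partial>M)"
proof -
  have "ennreal (2 * \<gamma>\<^sup>2) * (\<integral>\<^sup>+\<omega>. min (d1 \<omega>) (d2 \<omega>) \<partial>M) = (\<integral>\<^sup>+\<omega>. ennreal (2 * \<gamma>\<^sup>2) * min (d1 \<omega>) (d2 \<omega>) \<partial>M)"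
    by (rule nn_integral_cmult[symmetric]) measurable
  also have "\<dots> \<le> (\<integral>\<^sup>+\<omega>. d1 \<omega> * ennreal ((c \<omega> - \<gamma>)\<^sup>2) + d2 \<omega> * ennreal ((c \<omega> + \<gamma>)\<^sup>2) \<partial>M)"
  proof (rule nn_integral_mono)
    fix \<omega>
    have "ennreal (2 * \<gamma>\<^sup>2) \<le> ennreal ((c \<omega> - \<gamma>)\<^sup>2) + ennreal ((c \<omega> + \<gamma>)\<^sup>2)"
    proof -
      have "2 * \<gamma>\<^sup>2 \<le> (c \<omega> - \<gamma>)\<^sup>2 + (c \<omega> + \<gamma>)\<^sup>2" by (simp add: power2_eq_square algebra_simps)
      then show ?thesis by (simp add: ennreal_plus[symmetric] del: ennreal_plus)
    qed
    then have "ennreal (2 * \<gamma>\<^sup>2) * min (d1 \<omega>) (d2 \<omega>) \<le> (ennreal ((c \<omega> - \<gamma>)\<^sup>2) + ennreal ((c \<omega> + \<gamma>)\<^sup>2)) * min (d1 \<omega>) (d2 \<omega>)"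
      by (rule mult_right_mono) simp
    also have "\<dots> = ennreal ((c \<omega> - \<gamma>)\<^sup>2) * min (d1 \<omega>) (d2 \<omega>) + ennreal ((c \<omega> + \<gamma>)\<^sup>2) * min (d1 \<omega>) (d2 \<omega>)"
      by (simp add: distrib_right)
    also have "\<dots> \<le> d1 \<omega> * ennreal ((c \<omega> - \<gamma>)\<^sup>2) + d2 \<omega> * ennreal ((c \<omega> + \<gamma>)\<^sup>2)"
      by (intro add_mono) (simp_all add: mult.commute[of "ennreal _"] mult_right_mono)
    finally show "ennreal (2 * \<gamma>\<^sup>2) * min (d1 \<omega>) (d2 \<omega>) \<le> d1 \<omega> * ennreal ((c \<omega> - \<gamma>)\<^sup>2) + d2 \<omega> * ennreal ((c \<omega> + \<gamma>)\<^sup>2)" .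
  qed
  also have "\<dots> = (\<integral>\<^sup>+\<omega>. d1 \<omega> * ennreal ((c \<omega> - \<gamma>)\<^sup>2) \<partial>M) + (\<integral>\<^sup>+\<omega>. d2 \<omega> * ennreal ((c \<omega> + \<gamma>)\<^sup>2) \<partial>M)"
    by (rule nn_integral_add) measurable
  finally show ?thesis .
qed

lemma th_cases: "th S k = 1 \<or> th S k = -1"
  unfolding th_def by auto

lemma assouad_k:
  fixes d :: "nat set \<Rightarrow> 'a \<Rightarrow> ennreal" and c :: "'a \<Rightarrow> real"
  assumes K: "finite K" and k: "k \<in> K"
    and dm: "\<And>S. S \<in> Pow K \<Longrightarrow> d S \<in> borel_measurable M"
    and cm: "c \<in> borel_measurable M"
    and A: "\<And>S. S \<in> Pow K \<Longrightarrow> A \<le> (\<integral>\<^sup>+\<omega>. min (d S \<omega>) (d (flip S k) \<omega>) \<partial>M)"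
  shows "of_nat (2 ^ card K) * ennreal (\<gamma>\<^sup>2) * A \<le> (\<Sum>S\<in>Pow K. \<integral>\<^sup>+\<omega>. d S \<omega> * ennreal ((c \<omega> - \<gamma> * th S k)\<^sup>2) \<partial>M)"
proof -
  define T where "T S = (\<integral>\<^sup>+\<omega>. d S \<omega> * ennreal ((c \<omega> - \<gamma> * th S k)\<^sup>2) \<partial>M)" for S
  have pair: "ennreal (2 * \<gamma>\<^sup>2) * A \<le> T S + T (flip S k)" if S: "S \<in> Pow K" for S
  proof -
    have fS: "flip S k \<in> Pow K" by (rule flip_Pow[OF k S])
    note [measurable] = dm[OF S] dm[OF fS] cm
    have "ennreal (2 * \<gamma>\<^sup>2) * A \<le> ennreal (2 * \<gamma>\<^sup>2) * (\<integral>\<^sup>+\<omega>. min (d S \<omega>) (d (flip S k) \<omega>) \<partial>M)"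
      by (intro mult_left_mono A[OF S]) simp
    also have "\<dots> \<le> T S + T (flip S k)"
    proof (cases "th S k = 1")
      case True
      then have t2: "th (flip S k) k = -1" by (simp add: th_flip)
      show ?thesis unfolding T_def True t2
        using assouad_pair[of "d S" M "d (flip S k)" c \<gamma>] by simp
    next
      case False
      then have t1: "th S k = -1" using th_cases by blast
      then have t2: "th (flip S k) k = 1" by (simp add: th_flip)
      have "(\<integral>\<^sup>+\<omega>. min (d S \<omega>) (d (flip S k) \<omega>) \<partial>M) = (\<integral>\<^sup>+\<omega>. min (d (flip S k) \<omega>) (d S \<omega>) \<partial>M)"
        by (simp add: min.commute)
      then show ?thesis unfolding T_def t1 t2
        using assouad_pair[of "d (flip S k)" M "d S" c \<gamma>] by (simp add: add.commute)
    qed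
    finally show ?thesis .
  qed
  have bij: "bij_betw (\<lambda>S. flip S k) (Pow K) (Pow K)"
    by (rule bij_betwI[where g="\<lambda>S. flip S k"]) (auto simp: flip_Pow[OF k] simp del: Pow_iff)
  have "(\<Sum>S\<in>Pow K. T (flip S k)) = (\<Sum>S\<in>Pow K. T S)"
    using sum.reindex_bij_betw[OF bij, of T] by simp
  then have "2 * (\<Sum>S\<in>Pow K. T S) = (\<Sum>S\<in>Pow K. T S + T (flip S k))"
    by (simp add: sum.distrib mult_2)
  also have "\<dots> \<ge> (\<Sum>S\<in>Pow K. ennreal (2 * \<gamma>\<^sup>2) * A)"
    by (intro sum_mono pair)
  finally have "2 * (of_nat (2 ^ card K) * ennreal (\<gamma>\<^sup>2) * A) \<le> 2 * (\<Sum>S\<in>Pow K. T S)"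
    using K by (simp add: card_Pow ennreal_mult ac_simps)
  then have "of_nat (2 ^ card K) * ennreal (\<gamma>\<^sup>2) * A \<le> (\<Sum>S\<in>Pow K. T S)"
    by (subst (asm) ennreal_mult_le_mult_iff) auto
  then show ?thesis unfolding T_def .
qed

lemma assouad:
  fixes d :: "nat set \<Rightarrow> 'a \<Rightarrow> ennreal" and c :: "nat \<Rightarrow> 'a \<Rightarrow> real"
  assumes K: "finite K"
    and dm: "\<And>S. S \<in> Pow K \<Longrightarrow> d S \<in> borel_measurable M"
    and cm: "\<And>k. k \<in> K \<Longrightarrow> c k \<in> borel_measurable M"
    and A: "\<And>S k. S \<in> Pow K \<Longrightarrow> k \<in> K \<Longrightarrow> A \<le> (\<integral>\<^sup>+\<omega>. min (d S \<omega>) (d (flip S k) \<omega>) \<partial>M)"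
  shows "of_nat (card K) * (of_nat (2 ^ card K) * ennreal (\<gamma>\<^sup>2) * A)
     \<le> (\<Sum>S\<in>Pow K. \<integral>\<^sup>+\<omega>. d S \<omega> * (\<Sum>k\<in>K. ennreal ((c k \<omega> - \<gamma> * th S k)\<^sup>2)) \<partial>M)"
proof -
  have "(\<Sum>S\<in>Pow K. \<integral>\<^sup>+\<omega>. d S \<omega> * (\<Sum>k\<in>K. ennreal ((c k \<omega> - \<gamma> * th S k)\<^sup>2)) \<partial>M)
     = (\<Sum>S\<in>Pow K. \<Sum>k\<in>K. \<integral>\<^sup>+\<omega>. d S \<omega> * ennreal ((c k \<omega> - \<gamma> * th S k)\<^sup>2) \<partial>M)"
  proof (rule sum.cong[OF refl])
    fix S assume S: "S \<in> Pow K"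
    note [measurable] = dm[OF S]
    show "(\<integral>\<^sup>+\<omega>. d S \<omega> * (\<Sum>k\<in>K. ennreal ((c k \<omega> - \<gamma> * th S k)\<^sup>2)) \<partial>M)
       = (\<Sum>k\<in>K. \<integral>\<^sup>+\<omega>. d S \<omega> * ennreal ((c k \<omega> - \<gamma> * th S k)\<^sup>2) \<partial>M)"
      unfolding sum_distrib_left
      by (rule nn_integral_sum) (use cm in measurable)
  qed
  also have "\<dots> = (\<Sum>k\<in>K. \<Sum>S\<in>Pow K. \<integral>\<^sup>+\<omega>. d S \<omega> * ennreal ((c k \<omega> - \<gamma> * th S k)\<^sup>2) \<partial>M)"
    by (rule sum.swap)
  also have "\<dots> \<ge> (\<Sum>k\<in>K. of_nat (2 ^ card K) * ennreal (\<gamma>\<^sup>2) * A)"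
    proof (rule sum_mono)
      fix k assume k: "k \<in> K"
      show "of_nat (2 ^ card K) * ennreal (\<gamma>\<^sup>2) * A \<le> (\<Sum>S\<in>Pow K. \<integral>\<^sup>+\<omega>. d S \<omega> * ennreal ((c k \<omega> - \<gamma> * th S k)\<^sup>2) \<partial>M)"
        by (rule assouad_k[where d=d and c="c k" and M=M and A=A, OF K k dm cm[OF k] A[OF _ k]])
    qed
  finally show ?thesis by simp
qed



lemma sqrt_min_bound:
  fixes a b :: real
  assumes "0 \<le> a" "0 \<le> b"
  shows "sqrt (a * b) \<le> 2 * min a b + (a + b) / 8"
proof -
  have key: "sqrt (x * y) \<le> 2 * x + y / 8" if "0 \<le> x" "0 \<le> y" for x y :: real
  proof -
    have "sqrt (x * y) = sqrt ((4 * x) * (y / 4))" by simp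
    also have "\<dots> \<le> (4 * x + y / 4) / 2" by (rule arith_geo_mean_sqrt) (use that in auto)
    finally show ?thesis by simp
  qed
  show ?thesis
  proof (cases "a \<le> b")
    case True
    then have "min a b = a" by simp
    then have "2 * a + b / 8 \<le> 2 * min a b + (a + b) / 8" using assms by simp
    then show ?thesis using key[OF assms] by (rule order_trans[rotated])
  next
    case False
    then have "min a b = b" by simp
    then have "2 * b + a / 8 \<le> 2 * min a b + (a + b) / 8" using assms by simp
    moreover have "sqrt (a * b) = sqrt (b * a)" by (simp add: mult.commute)
    ultimately show ?thesis using key[OF assms(2,1)] by linarith
  qed
qed

lemma sqrt_lower:
  fixes A v :: real
  assumes A: "0 < A" and v: "v\<^sup>2 \<le> A\<^sup>2"
  shows "A - v\<^sup>2 / A \<le> sqrt (A\<^sup>2 - v\<^sup>2)"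
proof (cases "A - v\<^sup>2 / A \<le> 0")
  case True
  then show ?thesis using v by (smt (verit) real_sqrt_ge_zero)
next
  case False
  have "(A - v\<^sup>2 / A)\<^sup>2 = A\<^sup>2 - 2 * v\<^sup>2 + v\<^sup>2 * (v\<^sup>2 / A\<^sup>2)"
    using A by (simp add: power2_eq_square field_simps)
  also have "v\<^sup>2 * (v\<^sup>2 / A\<^sup>2) \<le> v\<^sup>2 * 1"
    using v A by (intro mult_left_mono) auto
  finally have "(A - v\<^sup>2 / A)\<^sup>2 \<le> A\<^sup>2 - v\<^sup>2" by simp
  then show ?thesis by (rule real_le_rsqrt)
qed

lemma sqrt_prod_lower:
  fixes r r' :: real
  assumes r: "1/2 \<le> r" and r': "1/2 \<le> r'"
  shows "(r + r') / 2 - (r - r')\<^sup>2 / 2 \<le> sqrt (r * r')"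
proof -
  define A where "A = (r + r') / 2"
  define v where "v = (r - r') / 2"
  have A0: "1/2 \<le> A" unfolding A_def using r r' by simp
  have e: "r * r' = A\<^sup>2 - v\<^sup>2" unfolding A_def v_def by (simp add: power2_eq_square field_simps)
  have vA: "v\<^sup>2 \<le> A\<^sup>2" unfolding A_def v_def using r r' unfolding abs_le_square_iff[symmetric] by (simp add: abs_le_iff)
  have "v\<^sup>2 / A \<le> 2 * v\<^sup>2"
  proof -
    have "v\<^sup>2 * 1 \<le> v\<^sup>2 * (2 * A)" using A0 by (intro mult_left_mono) auto
    then have "v\<^sup>2 \<le> 2 * v\<^sup>2 * A" by (simp add: algebra_simps)
    then show ?thesis using A0 by (simp add: divide_le_eq)
  qed
  then have "A - 2 * v\<^sup>2 \<le> A - v\<^sup>2 / A" by simp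
  also have "\<dots> \<le> sqrt (A\<^sup>2 - v\<^sup>2)" using A0 vA by (intro sqrt_lower) auto
  finally show ?thesis unfolding e[symmetric] unfolding A_def v_def by (simp add: power2_eq_square field_simps)
qed

definition rS :: "real \<Rightarrow> nat \<Rightarrow> nat set \<Rightarrow> real \<Rightarrow> real" where
  "rS \<gamma> m S x = 2 * pi * fS \<gamma> m S x"

lemma rS_meas[measurable]: "rS \<gamma> m S \<in> borel_measurable borel"
  unfolding rS_def[abs_def] by measurable

lemma rS_bounds: "good \<gamma> m \<Longrightarrow> 1/2 \<le> rS \<gamma> m S x" "good \<gamma> m \<Longrightarrow> rS \<gamma> m S x \<le> 3/2"
  unfolding rS_def using fS_ratio_bounds by auto

lemma rS_integrable: "good \<gamma> m \<Longrightarrow> integrable MC (rS \<gamma> m S)"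
  unfolding rS_def[abs_def] using fS_integrable by simp

lemma integral_rS: "integral\<^sup>L MC (rS \<gamma> m S) = 2 * pi"
  unfolding rS_def[abs_def] using integral_fS by simp

lemma fS_flip_diff:
  assumes k: "k \<in> {1..m}"
  shows "fS \<gamma> m S x - fS \<gamma> m (flip S k) x = \<gamma> * (th S k - th (flip S k) k) * trig_basis k x"
proof -
  have "(\<Sum>j\<in>{1..m}. th S j * trig_basis j x) - (\<Sum>j\<in>{1..m}. th (flip S k) j * trig_basis j x)
      = (\<Sum>j\<in>{1..m}. (th S j - th (flip S k) j) * trig_basis j x)"
    by (simp add: sum_subtractf[symmetric] algebra_simps)
  also have "\<dots> = (\<Sum>j\<in>{1..m}. if j = k then (th S k - th (flip S k) k) * trig_basis k x else 0)"
    by (rule sum.cong) (auto simp: th_flip_same)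
  also have "\<dots> = (th S k - th (flip S k) k) * trig_basis k x"
    using k by simp
  finally have d: "(\<Sum>j\<in>{1..m}. th S j * trig_basis j x) - (\<Sum>j\<in>{1..m}. th (flip S k) j * trig_basis j x) = (th S k - th (flip S k) k) * trig_basis k x" .
  have "fS \<gamma> m S x - fS \<gamma> m (flip S k) x = \<gamma> * ((\<Sum>j\<in>{1..m}. th S j * trig_basis j x) - (\<Sum>j\<in>{1..m}. th (flip S k) j * trig_basis j x))"
    unfolding fS_alt by (simp add: right_diff_distrib)
  then show ?thesis unfolding d by simp
qed

lemma rS_diff_sq:
  assumes k: "k \<in> {1..m}"
  shows "(rS \<gamma> m S x - rS \<gamma> m (flip S k) x)\<^sup>2 = 16 * pi\<^sup>2 * \<gamma>\<^sup>2 * (trig_basis k x)\<^sup>2"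
proof -
  have "rS \<gamma> m S x - rS \<gamma> m (flip S k) x = 2 * pi * (\<gamma> * (th S k - th (flip S k) k) * trig_basis k x)"
    unfolding rS_def fS_flip_diff[OF k, symmetric] by (simp add: algebra_simps)
  moreover have "(th S k - th (flip S k) k)\<^sup>2 = 4"
    unfolding th_flip using th_cases[of S k] by auto
  ultimately show ?thesis by (simp add: power_mult_distrib)
qed

lemma one_dim:
  assumes g: "good \<gamma> m" and k: "k \<in> {1..m}"
  shows "2 * pi * (1 - 4 * pi * \<gamma>\<^sup>2) \<le> integral\<^sup>L MC (\<lambda>x. sqrt (rS \<gamma> m S x * rS \<gamma> m (flip S k) x))"
proof -
  let ?r = "rS \<gamma> m S" and ?r' = "rS \<gamma> m (flip S k)"
  define L where "L x = ?r x / 2 + ?r' x / 2 - 8 * pi\<^sup>2 * \<gamma>\<^sup>2 * (trig_basis k x * trig_basis k x)" for x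
  have Lle: "L x \<le> sqrt (?r x * ?r' x)" for x
  proof -
    have "(?r x + ?r' x) / 2 - (?r x - ?r' x)\<^sup>2 / 2 \<le> sqrt (?r x * ?r' x)"
      using rS_bounds(1)[OF g, of S x] rS_bounds(1)[OF g, of "flip S k" x] by (rule sqrt_prod_lower)
    then show ?thesis unfolding L_def rS_diff_sq[OF k] by (simp add: power2_eq_square field_simps)
  qed
  have ir: "integrable MC ?r" "integrable MC ?r'" using rS_integrable[OF g] by auto
  have iL: "integrable MC L" unfolding L_def using ir by simp
  have iS: "integrable MC (\<lambda>x. sqrt (?r x * ?r' x))"
  proof (rule bounded_integrable_MC[where B=2])
    show "\<bar>sqrt (?r x * ?r' x)\<bar> \<le> 2" for x
    proof -
      have "?r x * ?r' x \<le> 2 * 2"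
        using rS_bounds[OF g, of S x] rS_bounds[OF g, of "flip S k" x] by (intro mult_mono) auto
      then have "sqrt (?r x * ?r' x) \<le> sqrt (2 * 2)" by (rule real_sqrt_le_mono)
      moreover have "0 \<le> ?r x * ?r' x"
        using rS_bounds(1)[OF g, of S x] rS_bounds(1)[OF g, of "flip S k" x] by (intro mult_nonneg_nonneg) auto
      ultimately show ?thesis by simp
    qed
  qed simp
  have "integral\<^sup>L MC L = integral\<^sup>L MC ?r / 2 + integral\<^sup>L MC ?r' / 2 - 8 * pi\<^sup>2 * \<gamma>\<^sup>2 * integral\<^sup>L MC (\<lambda>x. trig_basis k x * trig_basis k x)"
    unfolding L_def using ir by simp
  also have "\<dots> = 2 * pi * (1 - 4 * pi * \<gamma>\<^sup>2)"
    by (simp add: integral_rS trig_ortho_MC power2_eq_square algebra_simps)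
  finally have "integral\<^sup>L MC L = 2 * pi * (1 - 4 * pi * \<gamma>\<^sup>2)" .
  moreover have "integral\<^sup>L MC L \<le> integral\<^sup>L MC (\<lambda>x. sqrt (?r x * ?r' x))"
    by (rule integral_mono[OF iL iS Lle])
  ultimately show ?thesis by simp
qed



lemma prob_mu: "censoring_law Q \<Longrightarrow> prob_space (mu Q)"
  unfolding mu_def by (rule prob_XQ[OF _ is_density_f0])

lemma fst_meas_mu:
  assumes Q: "censoring_law Q" and h: "h \<in> borel_measurable borel"
  shows "(\<lambda>z. h (fst z)) \<in> borel_measurable (mu Q)"
proof -
  have m1: "(\<lambda>z::real\<times>real\<times>real. h (fst z)) \<in> borel_measurable ((borel::real measure) \<Otimes>\<^sub>M (borel :: (real\<times>real) measure))"
    using h by measurable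
  have s1: "sets (mu Q) = sets ((borel::real measure) \<Otimes>\<^sub>M (borel :: (real\<times>real) measure))"
    unfolding mu_def sets_XQ[OF Q] by (simp only: borel_prod)
  show ?thesis unfolding measurable_cong_sets[OF s1 refl] by (rule m1)
qed

lemma nn_mu_fst:
  assumes Q: "censoring_law Q" and h[measurable]: "h \<in> borel_measurable borel"
  shows "(\<integral>\<^sup>+z. ennreal (h (fst z)) \<partial>mu Q) = ennreal (1/(2*pi)) * (\<integral>\<^sup>+x. ennreal (h x) \<partial>MC)"
proof -
  interpret Q: prob_space Q using Q unfolding censoring_law_def by simp
  have hm: "(\<lambda>z. ennreal (h (fst z))) \<in> borel_measurable (X_law f0 \<Otimes>\<^sub>M Q)"
    using fst_meas_mu[OF Q h] unfolding mu_def by simp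
  have "(\<integral>\<^sup>+z. ennreal (h (fst z)) \<partial>mu Q) = (\<integral>\<^sup>+x. \<integral>\<^sup>+y. ennreal (h (fst (x, y))) \<partial>Q \<partial>X_law f0)"
    unfolding mu_def by (rule Q.nn_integral_fst[symmetric, OF hm])
  also have "\<dots> = (\<integral>\<^sup>+x. ennreal (h x) \<partial>X_law f0)"
    by (simp add: Q.emeasure_space_1)
  also have "\<dots> = (\<integral>\<^sup>+x. (ennreal (f0 x) * indicator circ x) * ennreal (h x) \<partial>lborel)"
    unfolding X_law_def by (rule nn_integral_density) (auto simp: f0_def)
  also have "\<dots> = (\<integral>\<^sup>+x. ennreal (1/(2*pi)) * (ennreal (h x) * indicator circ x) \<partial>lborel)"
    by (simp add: f0_def ac_simps)
  also have "\<dots> = ennreal (1/(2*pi)) * (\<integral>\<^sup>+x\<in>circ. ennreal (h x) \<partial>lborel)"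
    by (rule nn_integral_cmult) measurable
  also have "\<dots> = ennreal (1/(2*pi)) * (\<integral>\<^sup>+x. ennreal (h x) \<partial>MC)"
    by (simp add: nn_MC)
  finally show ?thesis .
qed

lemma nn_mu_fst_int:
  assumes Q: "censoring_law Q" and h[measurable]: "h \<in> borel_measurable borel"
    and nn: "\<And>x. 0 \<le> h x" and hi: "integrable MC h"
  shows "(\<integral>\<^sup>+z. ennreal (h (fst z)) \<partial>mu Q) = ennreal (integral\<^sup>L MC h / (2*pi))"
proof -
  have "(\<integral>\<^sup>+x. ennreal (h x) \<partial>MC) = ennreal (integral\<^sup>L MC h)"
    by (rule nn_integral_eq_integral[OF hi]) (simp add: nn)
  then show ?thesis unfolding nn_mu_fst[OF Q h]
    using nn by (simp add: ennreal_mult''[symmetric] integral_nonneg)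
qed

lemma prod_integral:
  assumes Q: "censoring_law Q" and h[measurable]: "h \<in> borel_measurable borel"
  shows "(\<integral>\<^sup>+\<omega>. (\<Prod>i\<in>{..<n}. ennreal (h (fst (\<omega> i)))) \<partial>PiM {..<n} (\<lambda>_. mu Q))
     = (\<integral>\<^sup>+z. ennreal (h (fst z)) \<partial>mu Q) ^ n"
proof -
  interpret M: prob_space "mu Q" by (rule prob_mu[OF Q])
  interpret P: product_sigma_finite "\<lambda>_. mu Q"
    by (simp add: product_sigma_finite_def M.sigma_finite_measure_axioms)
  have [measurable]: "(\<lambda>z. h (fst z)) \<in> borel_measurable (mu Q)" by (rule fst_meas_mu[OF Q h])
  have "(\<integral>\<^sup>+\<omega>. (\<Prod>i\<in>{..<n}. ennreal (h (fst (\<omega> i)))) \<partial>PiM {..<n} (\<lambda>_. mu Q))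
     = (\<Prod>i\<in>{..<n}. (\<integral>\<^sup>+z. ennreal (h (fst z)) \<partial>mu Q))"
    by (rule P.product_nn_integral_prod[where f="\<lambda>i z. ennreal (h (fst z))"]) auto
  then show ?thesis by simp
qed

lemma sqrt_prod_real: "finite A \<Longrightarrow> sqrt (prod f A) = (\<Prod>i\<in>A. sqrt (f i :: real))"
  by (induction A rule: finite_induct) (auto simp: real_sqrt_mult)

definition dens :: "real \<Rightarrow> nat \<Rightarrow> nat set \<Rightarrow> nat \<Rightarrow> (nat \<Rightarrow> real \<times> real \<times> real) \<Rightarrow> ennreal" where
  "dens \<gamma> m S n \<omega> = (\<Prod>i\<in>{..<n}. ennreal (rS \<gamma> m S (fst (\<omega> i))))"

lemma dens_meas:
  assumes Q: "censoring_law Q"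
  shows "dens \<gamma> m S n \<in> borel_measurable (PiM {..<n} (\<lambda>_. mu Q))"
proof -
  have [measurable]: "(\<lambda>z. rS \<gamma> m S (fst z)) \<in> borel_measurable (mu Q)" by (rule fst_meas_mu[OF Q rS_meas])
  show ?thesis unfolding dens_def[abs_def] by measurable
qed

lemma dens_total:
  assumes Q: "censoring_law Q" and g: "good \<gamma> m"
  shows "(\<integral>\<^sup>+\<omega>. dens \<gamma> m S n \<omega> \<partial>PiM {..<n} (\<lambda>_. mu Q)) = 1"
proof -
  have "(\<integral>\<^sup>+z. ennreal (rS \<gamma> m S (fst z)) \<partial>mu Q) = ennreal (integral\<^sup>L MC (rS \<gamma> m S) / (2*pi))"
    by (rule nn_mu_fst_int[OF Q rS_meas]) (auto intro: rS_integrable[OF g] order_trans[OF _ rS_bounds(1)[OF g]])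
  also have "\<dots> = 1" by (simp add: integral_rS)
  finally show ?thesis unfolding dens_def by (simp add: prod_integral[OF Q rS_meas])
qed

lemma affinity:
  assumes Q: "censoring_law Q" and g: "good \<gamma> m" and k: "k \<in> {1..m}"
    and small: "4 * pi * \<gamma>\<^sup>2 * real n \<le> 1/4" "4 * pi * \<gamma>\<^sup>2 \<le> 1"
  shows "ennreal (1/4) \<le> (\<integral>\<^sup>+\<omega>. min (dens \<gamma> m S n \<omega>) (dens \<gamma> m (flip S k) n \<omega>) \<partial>PiM {..<n} (\<lambda>_. mu Q))"
proof -
  let ?P = "PiM {..<n} (\<lambda>_. mu Q)"
  let ?r = "rS \<gamma> m S" and ?r' = "rS \<gamma> m (flip S k)"
  define sq where "sq x = sqrt (?r x * ?r' x)" for x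
  have sqm[measurable]: "sq \<in> borel_measurable borel" unfolding sq_def[abs_def] by measurable
  have rnn: "0 \<le> ?r x" "0 \<le> ?r' x" for x
    using rS_bounds(1)[OF g, of S x] rS_bounds(1)[OF g, of "flip S k" x] by auto
  have sqnn: "0 \<le> sq x" for x using rnn[of x] unfolding sq_def by simp
  have sqi: "integrable MC sq"
  proof (rule bounded_integrable_MC[where B=2])
    show "\<bar>sq x\<bar> \<le> 2" for x
    proof -
      have "?r x * ?r' x \<le> 2 * 2"
        using rS_bounds[OF g, of S x] rS_bounds[OF g, of "flip S k" x] by (intro mult_mono) auto
      then have "sq x \<le> sqrt (2 * 2)" unfolding sq_def by (rule real_sqrt_le_mono)
      then show ?thesis using sqnn[of x] by simp
    qed
  qed simp
  have I: "1 - 4 * pi * \<gamma>\<^sup>2 \<le> integral\<^sup>L MC sq / (2*pi)"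
    using one_dim[OF g k, of S] unfolding sq_def[symmetric] by (simp add: field_simps)
  have Bern: "3/4 \<le> (1 - 4 * pi * \<gamma>\<^sup>2) ^ n"
  proof -
    have "1 + real n * (- (4 * pi * \<gamma>\<^sup>2)) \<le> (1 + - (4 * pi * \<gamma>\<^sup>2)) ^ n"
      by (rule Bernoulli_inequality) (use small in simp)
    then show ?thesis using small(1) by (simp add: algebra_simps)
  qed
  have lower: "ennreal (3/4) \<le> (\<integral>\<^sup>+\<omega>. (\<Prod>i\<in>{..<n}. ennreal (sq (fst (\<omega> i)))) \<partial>?P)"
  proof -
    have "(\<integral>\<^sup>+\<omega>. (\<Prod>i\<in>{..<n}. ennreal (sq (fst (\<omega> i)))) \<partial>?P) = ennreal (integral\<^sup>L MC sq / (2*pi)) ^ n"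
      by (simp add: prod_integral[OF Q sqm] nn_mu_fst_int[OF Q sqm sqnn sqi])
    also have "\<dots> = ennreal ((integral\<^sup>L MC sq / (2*pi)) ^ n)"
      by (simp add: ennreal_power integral_nonneg sqnn)
    also have "ennreal ((1 - 4 * pi * \<gamma>\<^sup>2) ^ n) \<le> \<dots>"
      using I small(2) by (intro ennreal_leI power_mono) auto
    finally have "ennreal ((1 - 4 * pi * \<gamma>\<^sup>2) ^ n) \<le> (\<integral>\<^sup>+\<omega>. (\<Prod>i\<in>{..<n}. ennreal (sq (fst (\<omega> i)))) \<partial>?P)" .
    moreover have "ennreal (3/4) \<le> ennreal ((1 - 4 * pi * \<gamma>\<^sup>2) ^ n)" using Bern by (rule ennreal_leI)
    ultimately show ?thesis by (rule order_trans[rotated])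
  qed
  have rnn': "0 \<le> rS \<gamma> m S' x" for S' x using rS_bounds(1)[OF g, of S' x] by linarith
  define D where "D S' (\<omega>::nat \<Rightarrow> real \<times> real \<times> real) = (\<Prod>i\<in>{..<n}. rS \<gamma> m S' (fst (\<omega> i)))" for S' \<omega>
  have Dnn: "0 \<le> D S' \<omega>" for S' \<omega>
    unfolding D_def by (intro prod_nonneg) (simp add: rnn')
  have densD: "dens \<gamma> m S' n \<omega> = ennreal (D S' \<omega>)" for S' \<omega>
    unfolding dens_def D_def by (intro prod_ennreal) (simp add: rnn')
  have pw: "(\<Prod>i\<in>{..<n}. ennreal (sq (fst (\<omega> i))))
      \<le> ennreal 2 * min (dens \<gamma> m S n \<omega>) (dens \<gamma> m (flip S k) n \<omega>) + ennreal (1/8) * (dens \<gamma> m S n \<omega> + dens \<gamma> m (flip S k) n \<omega>)" for \<omega>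
  proof -
    have "(\<Prod>i\<in>{..<n}. ennreal (sq (fst (\<omega> i)))) = ennreal (\<Prod>i\<in>{..<n}. sq (fst (\<omega> i)))"
      by (rule prod_ennreal) (simp add: sqnn)
    also have "(\<Prod>i\<in>{..<n}. sq (fst (\<omega> i))) = sqrt (D S \<omega> * D (flip S k) \<omega>)"
      unfolding sq_def D_def by (simp only: prod.distrib[symmetric] sqrt_prod_real[OF finite_lessThan])
    also have "ennreal (sqrt (D S \<omega> * D (flip S k) \<omega>)) \<le> ennreal (2 * min (D S \<omega>) (D (flip S k) \<omega>) + 1/8 * (D S \<omega> + D (flip S k) \<omega>))"
      using sqrt_min_bound[OF Dnn Dnn, of S \<omega> "flip S k" \<omega>] by (intro ennreal_leI) simp
    also have "\<dots> = ennreal 2 * min (dens \<gamma> m S n \<omega>) (dens \<gamma> m (flip S k) n \<omega>) + ennreal (1/8) * (dens \<gamma> m S n \<omega> + dens \<gamma> m (flip S k) n \<omega>)"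
      proof -
        have m0: "0 \<le> min (D S \<omega>) (D (flip S k) \<omega>)" using Dnn by simp
        have "ennreal (2 * min (D S \<omega>) (D (flip S k) \<omega>) + 1/8 * (D S \<omega> + D (flip S k) \<omega>))
           = ennreal (2 * min (D S \<omega>) (D (flip S k) \<omega>)) + ennreal (1/8 * (D S \<omega> + D (flip S k) \<omega>))"
          using m0 Dnn by (intro ennreal_plus) auto
        also have "ennreal (2 * min (D S \<omega>) (D (flip S k) \<omega>)) = ennreal 2 * ennreal (min (D S \<omega>) (D (flip S k) \<omega>))"
          using m0 by (intro ennreal_mult) auto
        also have "ennreal (1/8 * (D S \<omega> + D (flip S k) \<omega>)) = ennreal (1/8) * ennreal (D S \<omega> + D (flip S k) \<omega>)"
          using Dnn by (intro ennreal_mult) (auto intro: add_nonneg_nonneg)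
        also have "ennreal (D S \<omega> + D (flip S k) \<omega>) = ennreal (D S \<omega>) + ennreal (D (flip S k) \<omega>)"
          using Dnn by (intro ennreal_plus) auto
        also have "ennreal (min (D S \<omega>) (D (flip S k) \<omega>)) = min (ennreal (D S \<omega>)) (ennreal (D (flip S k) \<omega>))"
          using Dnn by (simp add: min_ennreal)
        finally show ?thesis by (simp only: densD)
      qed
    finally show ?thesis .
  qed
  have dm[measurable]: "dens \<gamma> m S' n \<in> borel_measurable ?P" for S' by (rule dens_meas[OF Q])
  have "ennreal (3/4) \<le> (\<integral>\<^sup>+\<omega>. ennreal 2 * min (dens \<gamma> m S n \<omega>) (dens \<gamma> m (flip S k) n \<omega>) + ennreal (1/8) * (dens \<gamma> m S n \<omega> + dens \<gamma> m (flip S k) n \<omega>) \<partial>?P)"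
    using lower by (rule order_trans) (intro nn_integral_mono pw)
  also have "\<dots> = ennreal 2 * (\<integral>\<^sup>+\<omega>. min (dens \<gamma> m S n \<omega>) (dens \<gamma> m (flip S k) n \<omega>) \<partial>?P) + ennreal (1/8) * ((\<integral>\<^sup>+\<omega>. dens \<gamma> m S n \<omega> \<partial>?P) + (\<integral>\<^sup>+\<omega>. dens \<gamma> m (flip S k) n \<omega> \<partial>?P))"
    by (simp add: nn_integral_add nn_integral_cmult)
  also have "\<dots> = ennreal 2 * (\<integral>\<^sup>+\<omega>. min (dens \<gamma> m S n \<omega>) (dens \<gamma> m (flip S k) n \<omega>) \<partial>?P) + ennreal (1/4)"
    proof -
      have "ennreal (1/8) * ennreal 2 = ennreal (1/8 * 2)" by (rule ennreal_mult[symmetric]) auto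
      then have e8: "ennreal (1/8) * 2 = ennreal (1/4)" by simp
      show ?thesis by (simp add: dens_total[OF Q g] e8)
    qed
  finally have main: "ennreal (3/4) \<le> ennreal 2 * (\<integral>\<^sup>+\<omega>. min (dens \<gamma> m S n \<omega>) (dens \<gamma> m (flip S k) n \<omega>) \<partial>?P) + ennreal (1/4)" .
  show ?thesis
  proof (cases "(\<integral>\<^sup>+\<omega>. min (dens \<gamma> m S n \<omega>) (dens \<gamma> m (flip S k) n \<omega>) \<partial>?P)")
    case (real x)
    have e1: "ennreal (2 * x) = 2 * ennreal x" using real ennreal_mult[of 2 x] by simp
    have e2: "ennreal (2 * x + 1/4) = ennreal (2 * x) + ennreal (1/4)" using real by (intro ennreal_plus) auto
    from main real have "ennreal (3/4) \<le> ennreal (2 * x + 1/4)"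
      unfolding e2 e1 by simp
    then have "3/4 \<le> 2 * x + 1/4" using real by (subst (asm) ennreal_le_iff) auto
    then have "1/4 \<le> x" by simp
    then show ?thesis using real by (simp add: ennreal_leI)
  next
    case top then show ?thesis by simp
  qed
qed



lemma compose_meas:
  assumes Q: "censoring_law Q"
  shows "compose {..<n} gmap \<in> measurable (PiM {..<n} (\<lambda>_. mu Q)) (PiM {..<n} (\<lambda>_. (borel :: (real \<times> real \<times> real) measure)))"
proof -
  have g[measurable]: "gmap \<in> measurable (mu Q) borel"
    using gmap_meas unfolding mu_def measurable_cong_sets[OF sets_XQ[OF Q] refl] .
  show ?thesis unfolding compose_def by measurable
qed

lemma fh_slice:
  assumes fh: "fh \<in> estimators n" and w: "\<omega>' \<in> space (PiM {..<n} (\<lambda>_. (borel :: (real \<times> real \<times> real) measure)))"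
  shows "fh \<omega>' \<in> borel_measurable borel"
proof -
  have "(\<lambda>(\<omega>, x). fh \<omega> x) \<in> borel_measurable (PiM {..<n} (\<lambda>_. (borel :: (real \<times> real \<times> real) measure)) \<Otimes>\<^sub>M lborel)"
    using fh unfolding estimators_def by simp
  from measurable_Pair2[OF this w] show ?thesis by simp
qed

definition chat :: "((nat \<Rightarrow> real \<times> real \<times> real) \<Rightarrow> real \<Rightarrow> real) \<Rightarrow> nat \<Rightarrow> nat \<Rightarrow> (nat \<Rightarrow> real \<times> real \<times> real) \<Rightarrow> real" where
  "chat fh n k \<omega> = coeff (fh (compose {..<n} gmap \<omega>)) k"

lemma chat_meas:
  assumes Q: "censoring_law Q" and fh: "fh \<in> estimators n"
  shows "chat fh n k \<in> borel_measurable (PiM {..<n} (\<lambda>_. mu Q))"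
proof -
  have F[measurable]: "(\<lambda>(\<omega>, x). fh \<omega> x) \<in> borel_measurable (PiM {..<n} (\<lambda>_. (borel :: (real \<times> real \<times> real) measure)) \<Otimes>\<^sub>M lborel)"
    using fh unfolding estimators_def by simp
  have C[measurable]: "compose {..<n} gmap \<in> measurable (PiM {..<n} (\<lambda>_. mu Q)) (PiM {..<n} (\<lambda>_. (borel :: (real \<times> real \<times> real) measure)))"
    by (rule compose_meas[OF Q])
  have "(\<lambda>(\<omega>, x). fh (compose {..<n} gmap \<omega>) x) \<in> borel_measurable (PiM {..<n} (\<lambda>_. mu Q) \<Otimes>\<^sub>M lborel)"
  proof -
    have "(\<lambda>p. (compose {..<n} gmap (fst p), snd p)) \<in> measurable (PiM {..<n} (\<lambda>_. mu Q) \<Otimes>\<^sub>M lborel) (PiM {..<n} (\<lambda>_. (borel :: (real \<times> real \<times> real) measure)) \<Otimes>\<^sub>M lborel)"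
      by measurable
    from measurable_comp[OF this F] show ?thesis by (simp add: comp_def case_prod_beta')
  qed
  then have "(\<lambda>(\<omega>, x). indicator circ x *\<^sub>R (fh (compose {..<n} gmap \<omega>) x * trig_basis k x)) \<in> borel_measurable (PiM {..<n} (\<lambda>_. mu Q) \<Otimes>\<^sub>M lborel)"
    by measurable
  then have "(\<lambda>\<omega>. \<integral>x. indicator circ x *\<^sub>R (fh (compose {..<n} gmap \<omega>) x * trig_basis k x) \<partial>lborel) \<in> borel_measurable (PiM {..<n} (\<lambda>_. mu Q))"
    by (rule lborel.borel_measurable_lebesgue_integral[where f="\<lambda>\<omega> x. indicator circ x *\<^sub>R (fh (compose {..<n} gmap \<omega>) x * trig_basis k x)"])
  then show ?thesis unfolding chat_def[abs_def] coeff_def set_lebesgue_integral_def .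
qed

lemma compose_space:
  "compose {..<n} gmap \<omega> \<in> space (PiM {..<n} (\<lambda>_. (borel :: (real \<times> real \<times> real) measure)))"
  unfolding compose_def by (simp add: space_PiM)

lemma risk_lower_S:
  assumes Q: "censoring_law Q" and g: "good \<gamma> m" and fh: "fh \<in> estimators n"
  shows "(\<integral>\<^sup>+\<omega>. dens \<gamma> m S n \<omega> * (\<Sum>k\<in>{1..m}. ennreal ((chat fh n k \<omega> - \<gamma> * th S k)\<^sup>2)) \<partial>PiM {..<n} (\<lambda>_. mu Q))
     \<le> risk Q n fh (fS \<gamma> m S)"
proof -
  have "risk Q n fh (fS \<gamma> m S) = (\<integral>\<^sup>+\<omega>. (\<Prod>i\<in>{..<n}. ennreal (2*pi * fS \<gamma> m S (fst (\<omega> i)))) * Hrisk fh (fS \<gamma> m S) (compose {..<n} gmap \<omega>) \<partial>PiM {..<n} (\<lambda>_. mu Q))"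
    by (rule risk_eq[OF Q fS_density[OF g] fS_meas fS_nonneg[OF g] fh])
  also have "\<dots> = (\<integral>\<^sup>+\<omega>. dens \<gamma> m S n \<omega> * Hrisk fh (fS \<gamma> m S) (compose {..<n} gmap \<omega>) \<partial>PiM {..<n} (\<lambda>_. mu Q))"
    unfolding dens_def rS_def ..
  finally have r: "risk Q n fh (fS \<gamma> m S) = \<dots>" .
  show ?thesis unfolding r
  proof (rule nn_integral_mono)
    fix \<omega>
    let ?g = "fh (compose {..<n} gmap \<omega>)"
    have gm: "?g \<in> borel_measurable borel" by (rule fh_slice[OF fh compose_space])
    have "(\<Sum>k\<in>{1..m}. ennreal ((chat fh n k \<omega> - \<gamma> * th S k)\<^sup>2)) = ennreal (\<Sum>k\<in>{1..m}. (coeff ?g k - acoef \<gamma> S k)\<^sup>2)"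
      unfolding chat_def by (subst sum_ennreal) (auto intro!: sum.cong simp: acoef_def)
    also have "\<dots> \<le> ennreal (\<Sum>k\<in>{..m}. (coeff ?g k - acoef \<gamma> S k)\<^sup>2)"
      by (intro ennreal_leI sum_mono2) auto
    also have "\<dots> \<le> Hrisk fh (fS \<gamma> m S) (compose {..<n} gmap \<omega>)"
      unfolding Hrisk_def fS_def by (rule bessel[OF gm]) simp
    finally show "dens \<gamma> m S n \<omega> * (\<Sum>k\<in>{1..m}. ennreal ((chat fh n k \<omega> - \<gamma> * th S k)\<^sup>2))
       \<le> dens \<gamma> m S n \<omega> * Hrisk fh (fS \<gamma> m S) (compose {..<n} gmap \<omega>)"
      by (rule mult_left_mono) simp
  qed
qed

lemma minimax_lower_n:
  assumes Q: "censoring_law Q" and b: "\<beta> > 0" and g: "good \<gamma> m"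
    and sob: "real m * ((real m + 1) powr \<beta>)\<^sup>2 * \<gamma>\<^sup>2 < R\<^sup>2 / pi powr (2*\<beta>)"
    and small: "4 * pi * \<gamma>\<^sup>2 * real n \<le> 1/4" "4 * pi * \<gamma>\<^sup>2 \<le> 1"
  shows "ennreal (real m * \<gamma>\<^sup>2 / 4) \<le> minimax_risk \<beta> R Q n"
  unfolding minimax_risk_def
proof (rule INF_greatest)
  fix fh assume fh: "fh \<in> estimators n"
  let ?C = "{f. is_density f \<and> f \<in> sobolev \<beta> R}"
  let ?V = "SUP f \<in> ?C. risk Q n fh f"
  let ?K = "{1..m}"
  have inC: "fS \<gamma> m S \<in> ?C" for S
    using fS_density[OF g] fS_sobolev[OF g b sob] by auto
  have le: "risk Q n fh (fS \<gamma> m S) \<le> ?V" for S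
    by (rule SUP_upper[OF inC])
  have "of_nat (card ?K) * (of_nat (2 ^ card ?K) * ennreal (\<gamma>\<^sup>2) * ennreal (1/4))
     \<le> (\<Sum>S\<in>Pow ?K. \<integral>\<^sup>+\<omega>. dens \<gamma> m S n \<omega> * (\<Sum>k\<in>?K. ennreal ((chat fh n k \<omega> - \<gamma> * th S k)\<^sup>2)) \<partial>PiM {..<n} (\<lambda>_. mu Q))"
  proof (rule assouad)
    show "dens \<gamma> m S n \<in> borel_measurable (PiM {..<n} (\<lambda>_. mu Q))" for S by (rule dens_meas[OF Q])
    show "chat fh n k \<in> borel_measurable (PiM {..<n} (\<lambda>_. mu Q))" for k by (rule chat_meas[OF Q fh])
    show "ennreal (1/4) \<le> (\<integral>\<^sup>+\<omega>. min (dens \<gamma> m S n \<omega>) (dens \<gamma> m (flip S k) n \<omega>) \<partial>PiM {..<n} (\<lambda>_. mu Q))"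
      if "k \<in> ?K" for S k by (rule affinity[OF Q g that small])
  qed simp
  also have "\<dots> \<le> (\<Sum>S\<in>Pow ?K. risk Q n fh (fS \<gamma> m S))"
    by (intro sum_mono risk_lower_S[OF Q g fh])
  also have "\<dots> \<le> (\<Sum>S\<in>Pow ?K. ?V)"
    by (intro sum_mono le)
  also have "\<dots> = of_nat (2 ^ card ?K) * ?V"
    by (simp add: card_Pow)
  finally have main: "of_nat (card ?K) * (of_nat (2 ^ card ?K) * ennreal (\<gamma>\<^sup>2) * ennreal (1/4)) \<le> of_nat (2 ^ card ?K) * ?V" .
  have "of_nat (card ?K) * (of_nat (2 ^ card ?K) * ennreal (\<gamma>\<^sup>2) * ennreal (1/4))
     = of_nat (2 ^ card ?K) * ennreal (real m * \<gamma>\<^sup>2 / 4)"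
    by (simp add: ennreal_mult''[symmetric] ennreal_of_nat_eq_real_of_nat ac_simps)
  with main have "of_nat (2 ^ card ?K) * ennreal (real m * \<gamma>\<^sup>2 / 4) \<le> of_nat (2 ^ card ?K) * ?V" by simp
  then show "ennreal (real m * \<gamma>\<^sup>2 / 4) \<le> ?V"
    by (subst (asm) ennreal_mult_le_mult_iff) (auto simp: power_eq_top_ennreal)
qed



lemma floor_half:
  fixes x :: real
  assumes "1 \<le> x"
  shows "x / 2 \<le> real (nat \<lfloor>x\<rfloor>)" "real (nat \<lfloor>x\<rfloor>) \<le> x" "1 \<le> nat \<lfloor>x\<rfloor>"
proof -
  have f0: "real (nat \<lfloor>x\<rfloor>) = real_of_int \<lfloor>x\<rfloor>" using assms by simp
  have a: "real_of_int \<lfloor>x\<rfloor> \<le> x" "x < real_of_int \<lfloor>x\<rfloor> + 1" by linarith+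
  have b: "1 \<le> \<lfloor>x\<rfloor>" using assms by linarith
  show "real (nat \<lfloor>x\<rfloor>) \<le> x" using a f0 by simp
  show "1 \<le> nat \<lfloor>x\<rfloor>" using b by linarith
  show "x / 2 \<le> real (nat \<lfloor>x\<rfloor>)" using a b f0 by linarith
qed

lemma params:
  fixes \<beta> R :: real and n :: nat
  assumes b: "\<beta> \<ge> 1/2" and R: "R > 0" and n: "n \<ge> 1"
  defines "e \<equiv> 1 / (2*\<beta>+1)"
  defines "a \<equiv> min (1/(16*pi)) (R\<^sup>2 / (2 * (2*pi) powr (2*\<beta>)))"
  defines "x \<equiv> real n powr e"
  defines "m \<equiv> nat \<lfloor>x\<rfloor>"
  defines "\<gamma> \<equiv> sqrt (a / real n)"
  shows "good \<gamma> m"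
    and "real m * ((real m + 1) powr \<beta>)\<^sup>2 * \<gamma>\<^sup>2 < R\<^sup>2 / pi powr (2*\<beta>)"
    and "4 * pi * \<gamma>\<^sup>2 * real n \<le> 1/4" and "4 * pi * \<gamma>\<^sup>2 \<le> 1"
    and "a / 8 * real n powr (e - 1) \<le> real m * \<gamma>\<^sup>2 / 4"
proof -
  have n0: "0 < real n" "1 \<le> real n" using n by auto
  have e0: "0 < e" "e \<le> 1/2" unfolding e_def using b by (auto simp: field_simps)
  have a0: "0 < a" unfolding a_def using R by simp
  have a1: "a \<le> 1/(16*pi)" unfolding a_def by simp
  have a2: "a \<le> R\<^sup>2 / (2 * (2*pi) powr (2*\<beta>))" unfolding a_def by simp
  have x1: "1 \<le> x" unfolding x_def using n0 e0 by (simp add: ge_one_powr_ge_zero)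
  note fl = floor_half[OF x1, folded m_def]
  have m1: "1 \<le> m" by (rule fl(3))
  have mx: "real m \<le> x" by (rule fl(2))
  have xm: "x / 2 \<le> real m" by (rule fl(1))
  have g2: "\<gamma>\<^sup>2 = a / real n" unfolding \<gamma>_def using a0 n0 by simp
  have xsq: "x \<le> sqrt (real n)"
  proof -
    have "x \<le> real n powr (1/2)" unfolding x_def using n0 e0 by (intro powr_mono) auto
    then show ?thesis by (simp add: powr_half_sqrt n0(1) less_imp_le)
  qed
  have xpow: "x powr (2*\<beta>+1) = real n"
    unfolding x_def e_def using n0 b by (simp add: powr_powr)
  have mpow: "real m powr (2*\<beta>+1) \<le> real n"
  proof -
    have "real m powr (2*\<beta>+1) \<le> x powr (2*\<beta>+1)" by (rule powr_mono2) (use mx b in auto)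
    then show ?thesis using xpow by simp
  qed
  show "good \<gamma> m"
  proof -
    have gm: "\<gamma> * real m \<le> sqrt a"
    proof -
      have e: "\<gamma> * real m = sqrt a * (real m / sqrt (real n))"
        unfolding \<gamma>_def by (simp add: real_sqrt_divide)
      have q: "real m / sqrt (real n) \<le> 1"
        using mx xsq n0 by (simp add: divide_le_eq)
      have "sqrt a * (real m / sqrt (real n)) \<le> sqrt a * 1" by (rule mult_left_mono[OF q]) (simp add: less_imp_le[OF a0])
      then show ?thesis unfolding e by simp
    qed
    have pq: "pi / sqrt pi = sqrt pi" by (rule real_div_sqrt) simp
    have "2 * pi * \<gamma> * real m / sqrt pi = 2 * (pi / sqrt pi) * (\<gamma> * real m)"
      by (simp add: ac_simps)
    also have "\<dots> = 2 * sqrt pi * (\<gamma> * real m)" unfolding pq ..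
    also have "\<dots> \<le> 2 * sqrt pi * sqrt a" using gm by (intro mult_left_mono) auto
    also have "\<dots> = 2 * sqrt (pi * a)" by (simp add: real_sqrt_mult)
    also have "\<dots> \<le> 2 * sqrt (1/16)"
      using a1 by (intro mult_left_mono real_sqrt_le_mono) (auto simp: field_simps)
    also have "\<dots> = 1/2" by (simp add: real_sqrt_divide)
    finally show ?thesis unfolding good_def \<gamma>_def using a0 n0 by simp
  qed
  show "4 * pi * \<gamma>\<^sup>2 * real n \<le> 1/4"
    unfolding g2 using a1 n0 by (simp add: field_simps)
  then show "4 * pi * \<gamma>\<^sup>2 \<le> 1"
  proof -
    assume h: "4 * pi * \<gamma>\<^sup>2 * real n \<le> 1/4"
    have "4 * pi * \<gamma>\<^sup>2 * 1 \<le> 4 * pi * \<gamma>\<^sup>2 * real n" using n0 by (intro mult_left_mono) auto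
    then show ?thesis using h by linarith
  qed
  show "a / 8 * real n powr (e - 1) \<le> real m * \<gamma>\<^sup>2 / 4"
  proof -
    have "real n powr (e - 1) = x / real n" unfolding x_def using n0 by (simp add: powr_diff)
    then have "a / 8 * real n powr (e - 1) = (x / 2) * (a / real n) / 4" by (simp add: field_simps)
    also have "\<dots> \<le> real m * (a / real n) / 4"
      using xm a0 n0 by (intro divide_right_mono mult_right_mono) auto
    finally show ?thesis unfolding g2 .
  qed
  show "real m * ((real m + 1) powr \<beta>)\<^sup>2 * \<gamma>\<^sup>2 < R\<^sup>2 / pi powr (2*\<beta>)"
  proof -
    have "(real m + 1) powr \<beta> \<le> (2 * real m) powr \<beta>"
      using m1 b by (intro powr_mono2) auto
    then have "((real m + 1) powr \<beta>)\<^sup>2 \<le> ((2 * real m) powr \<beta>)\<^sup>2"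
      by (intro power_mono) auto
    also have "((2 * real m) powr \<beta>)\<^sup>2 = 2 powr (2*\<beta>) * real m powr (2*\<beta>)"
      using m1 by (simp add: powr_mult power2_eq_square powr_add[symmetric] mult_ac)
    finally have h1: "((real m + 1) powr \<beta>)\<^sup>2 \<le> 2 powr (2*\<beta>) * real m powr (2*\<beta>)" .
    have "real m * ((real m + 1) powr \<beta>)\<^sup>2 * \<gamma>\<^sup>2 \<le> real m * (2 powr (2*\<beta>) * real m powr (2*\<beta>)) * \<gamma>\<^sup>2"
      using h1 by (intro mult_right_mono mult_left_mono) auto
    also have "\<dots> = 2 powr (2*\<beta>) * real m powr (2*\<beta>+1) * \<gamma>\<^sup>2"
      using m1 by (simp add: powr_add mult_ac)
    also have "\<dots> \<le> 2 powr (2*\<beta>) * real n * \<gamma>\<^sup>2"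
      using mpow by (intro mult_right_mono mult_left_mono) auto
    also have "\<dots> = 2 powr (2*\<beta>) * a" unfolding g2 using n0 by simp
    also have "\<dots> \<le> 2 powr (2*\<beta>) * (R\<^sup>2 / (2 * (2*pi) powr (2*\<beta>)))"
      using a2 by (intro mult_left_mono) auto
    also have "\<dots> = R\<^sup>2 / (2 * pi powr (2*\<beta>))"
      by (simp add: powr_mult field_simps)
    also have "\<dots> < R\<^sup>2 / pi powr (2*\<beta>)"
      using R by (simp add: field_simps)
    finally show ?thesis .
  qed
qed

theorem theorem1:
  fixes \<beta> R :: real
  assumes "\<beta> \<ge> 1/2" and "R > 0"
  shows "\<exists>c::real. c > 0 \<and> (\<forall>Q. censoring_law Q \<longrightarrow>
           liminf (\<lambda>n. ennreal (real n powr (2*\<beta>/(2*\<beta>+1))) * minimax_risk \<beta> R Q n)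
             \<ge> ennreal c)"
proof -
  have b: "\<beta> \<ge> 1/2" and R: "R > 0" using assms by auto
  define e where "e = 1 / (2*\<beta>+1)"
  define a where "a = min (1/(16*pi)) (R\<^sup>2 / (2 * (2*pi) powr (2*\<beta>)))"
  have a0: "0 < a" unfolding a_def using R by simp
  have re: "2*\<beta>/(2*\<beta>+1) + (e - 1) = 0" unfolding e_def using b by (simp add: field_simps)
  have bound: "ennreal (a/8) \<le> ennreal (real n powr (2*\<beta>/(2*\<beta>+1))) * minimax_risk \<beta> R Q n"
    if Q: "censoring_law Q" and n: "n \<ge> 1" for Q n
  proof -
    define x where "x = real n powr e"
    define m where "m = nat \<lfloor>x\<rfloor>"
    define \<gamma> where "\<gamma> = sqrt (a / real n)"
    note P = params[OF b R n, folded e_def a_def, folded x_def, folded m_def, folded \<gamma>_def]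
    have low: "ennreal (real m * \<gamma>\<^sup>2 / 4) \<le> minimax_risk \<beta> R Q n"
      by (rule minimax_lower_n[OF Q _ P(1) P(2) P(3) P(4)]) (use b in simp)
    have n0: "0 < real n" using n by simp
    have "a / 8 = real n powr (2*\<beta>/(2*\<beta>+1)) * (a / 8 * real n powr (e - 1))"
    proof -
      have "real n powr (2*\<beta>/(2*\<beta>+1)) * real n powr (e - 1) = real n powr 0"
        unfolding powr_add[symmetric] re ..
      then show ?thesis using n0 by (simp add: algebra_simps)
    qed
    then have "ennreal (a/8) = ennreal (real n powr (2*\<beta>/(2*\<beta>+1))) * ennreal (a / 8 * real n powr (e - 1))"
      using a0 by (simp add: ennreal_mult[symmetric])
    also have "\<dots> \<le> ennreal (real n powr (2*\<beta>/(2*\<beta>+1))) * ennreal (real m * \<gamma>\<^sup>2 / 4)"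
      by (intro mult_left_mono ennreal_leI P(5)) simp
    also have "\<dots> \<le> ennreal (real n powr (2*\<beta>/(2*\<beta>+1))) * minimax_risk \<beta> R Q n"
      by (intro mult_left_mono low) simp
    finally show ?thesis .
  qed
  show ?thesis
  proof (intro exI[of _ "a/8"] conjI allI impI)
    show "0 < a / 8" using a0 by simp
    fix Q assume Q: "censoring_law Q"
    show "ennreal (a/8) \<le> liminf (\<lambda>n. ennreal (real n powr (2*\<beta>/(2*\<beta>+1))) * minimax_risk \<beta> R Q n)"
      by (rule Liminf_bounded) (use bound[OF Q] in \<open>auto simp: eventually_sequentially\<close>)
  qed
qed


end
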